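(* Let $L$ be a Lévy process with triplet $(b,\sigma^2,\mu)$, finite Lévy measure $\lambda=\mu(\mathbb R)<\infty$, and $X$ the solution of $dX_t=-aX_t\,dt+dL_t$ ($X_0$ independent of $L$). Suppose: (i) $a>0$, $\int_{|x|>1}\log|x|\,\mu(dx)<\infty$, $b=0$, $\sup_tE[X_t^2]<\infty$; (ii) $F\big((-2\Delta_n^\beta,2\Delta_n^\beta)\big)=o(T_n^{-1})$; (iii) $\beta\in(0,1/2)$ satisfies $T_n\Delta_n^{(1-2\beta)\wedge(1/2)}=o(1)$. Set $v_n=\Delta_n^\beta$ and define $$A_n^i=\big\{\mathbf 1_{\{|\Delta_iX|\le v_n\}}=\mathbf 1_{\{\Delta_iN=0\}}\big\},\qquad A_n=\bigcap_{i}A_n^i .$$ Then $P(A_n)\to1$ as $n\to\infty$.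
   Context: Since $\mu$ is finite and $b=0$, $L_t=\sigma W_t+J_t$ with $W$ a standard Brownian motion and $J_t=\sum_{k=1}^{N_t}Z_k$ an independent compound Poisson process; $N$ is the Poisson process (intensity $\lambda$) counting the jumps of $L$, and the $Z_k$ are i.i.d. with distribution $F$. Observation scheme: for each $n$, times $0=t_0<t_1<\dots<t_n=T_n$ with $T_n\to\infty$, $\Delta_n=\max_i(t_{i+1}-t_i)\downarrow0$ and $n\Delta_nT_n^{-1}=O(1)$. For a process $Y$, $\Delta_iY=Y_{t_{i+1}}-Y_{t_i}$. *)

theory Defs
  imports "HOL-Probability.Probability" "HOL-Library.Landau_Symbols"
begin

definition gen_sigma :: "'a measure \<Rightarrow> 'b measure \<Rightarrow> ('i \<Rightarrow> 'a \<Rightarrow> 'b) \<Rightarrow> 'i set \<Rightarrow> 'a set set" where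
  "gen_sigma M N X I = sigma_sets (space M) (\<Union>i\<in>I. {X i -` B \<inter> space M | B. B \<in> sets N})"

definition std_brownian_motion :: "'a measure \<Rightarrow> (real \<Rightarrow> 'a \<Rightarrow> real) \<Rightarrow> bool" where
  "std_brownian_motion M W \<longleftrightarrow>
     (\<forall>t\<ge>0. W t \<in> borel_measurable M) \<and>
     (\<forall>\<omega>\<in>space M. W 0 \<omega> = 0 \<and> continuous_on {0..} (\<lambda>t. W t \<omega>)) \<and>
     (\<forall>s t. 0 \<le> s \<and> s < t \<longrightarrow>
        distributed M lborel (\<lambda>\<omega>. W t \<omega> - W s \<omega>) (\<lambda>x. ennreal (normal_density 0 (sqrt (t - s)) x))) \<and>
     (\<forall>(n::nat) (ts::nat \<Rightarrow> real). 0 \<le> ts 0 \<and> (\<forall>i<n. ts i < ts (Suc i)) \<longrightarrow>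
        prob_space.indep_vars M (\<lambda>_. borel) (\<lambda>i \<omega>. W (ts (Suc i)) \<omega> - W (ts i) \<omega>) {..<n})"

definition poisson_process :: "'a measure \<Rightarrow> real \<Rightarrow> (real \<Rightarrow> 'a \<Rightarrow> nat) \<Rightarrow> bool" where
  "poisson_process M lam N \<longleftrightarrow>
     (\<forall>t\<ge>0. N t \<in> measurable M (count_space UNIV)) \<and>
     (\<forall>\<omega>\<in>space M. N 0 \<omega> = 0 \<and>
        (\<forall>s t. 0 \<le> s \<and> s \<le> t \<longrightarrow> N s \<omega> \<le> N t \<omega>) \<and>
        (\<forall>t\<ge>0. continuous (at_right t) (\<lambda>s. real (N s \<omega>)))) \<and>
     (\<forall>s t (k::nat). 0 \<le> s \<and> s \<le> t \<longrightarrow>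
        measure M {\<omega>\<in>space M. N t \<omega> - N s \<omega> = k}
          = exp (- lam * (t - s)) * (lam * (t - s)) ^ k / fact k) \<and>
     (\<forall>(n::nat) (ts::nat \<Rightarrow> real). 0 \<le> ts 0 \<and> (\<forall>i<n. ts i < ts (Suc i)) \<longrightarrow>
        prob_space.indep_vars M (\<lambda>_. count_space UNIV) (\<lambda>i \<omega>. N (ts (Suc i)) \<omega> - N (ts i) \<omega>) {..<n})"

end

theory Submission
  imports Defs
begin

lemma markov_real:
  assumes M: "prob_space M" and f: "f \<in> borel_measurable M" and f0: "\<And>\<omega>. 0 \<le> f \<omega>"
    and B: "(\<integral>\<^sup>+\<omega>. ennreal (f \<omega>) \<partial>M) \<le> ennreal B" and c: "0 < c" and B0: "0 \<le> B"
  shows "measure M {\<omega>\<in>space M. c \<le> f \<omega>} \<le> B / c"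
proof -
  interpret prob_space M by (rule M)
  have "emeasure M {\<omega>\<in>space M. 1 \<le> ennreal (1/c) * ennreal (f \<omega>)}
      \<le> ennreal (1/c) * (\<integral>\<^sup>+\<omega>. ennreal (f \<omega>) * indicator (space M) \<omega> \<partial>M)"
    by (rule nn_integral_Markov_inequality) (use f in auto)
  also have "(\<integral>\<^sup>+\<omega>. ennreal (f \<omega>) * indicator (space M) \<omega> \<partial>M) = (\<integral>\<^sup>+\<omega>. ennreal (f \<omega>) \<partial>M)"
    by (intro nn_integral_cong) auto
  also have "ennreal (1/c) * \<dots> \<le> ennreal (1/c) * ennreal B" using B by (intro mult_left_mono) auto
  also have "\<dots> = ennreal (B / c)" using c B0 by (simp add: ennreal_mult[symmetric] divide_inverse mult.commute)
  finally have le: "emeasure M {\<omega>\<in>space M. 1 \<le> ennreal (1/c) * ennreal (f \<omega>)} \<le> ennreal (B / c)" .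
  have "{\<omega>\<in>space M. c \<le> f \<omega>} = {\<omega>\<in>space M. 1 \<le> ennreal (1/c) * ennreal (f \<omega>)}"
  proof -
    have "c \<le> f \<omega> \<longleftrightarrow> 1 \<le> ennreal (1/c) * ennreal (f \<omega>)" for \<omega>
    proof -
      have "ennreal (1/c) * ennreal (f \<omega>) = ennreal (f \<omega> / c)"
        using c f0[of \<omega>] by (simp add: ennreal_mult'[symmetric] divide_inverse mult.commute)
      also have "1 \<le> \<dots> \<longleftrightarrow> 1 \<le> f \<omega> / c" using ennreal_le_iff[of "f \<omega> / c" 1] f0[of \<omega>] c by (simp add: ennreal_1[symmetric] del: ennreal_1)
      also have "\<dots> \<longleftrightarrow> c \<le> f \<omega>" using c by (simp add: field_simps)
      finally show ?thesis by simp
    qed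
    thus ?thesis by auto
  qed
  with le have "emeasure M {\<omega>\<in>space M. c \<le> f \<omega>} \<le> ennreal (B / c)" by simp
  thus ?thesis using B0 c by (simp add: emeasure_eq_measure)
qed

lemma floor_approx: "(\<lambda>k. real_of_int \<lfloor>real (Suc k) * s\<rfloor> / real (Suc k)) \<longlonglongrightarrow> (s::real)"
proof (rule tendsto_sandwich[where f="\<lambda>k. s - 1 / real (Suc k)" and h="\<lambda>k. s"])
  show "\<forall>\<^sub>F k in sequentially. s - 1 / real (Suc k) \<le> real_of_int \<lfloor>real (Suc k) * s\<rfloor> / real (Suc k)"
  proof (intro always_eventually allI)
    fix k
    have "real (Suc k) * s - 1 \<le> real_of_int \<lfloor>real (Suc k) * s\<rfloor>" by linarith
    hence "(real (Suc k) * s - 1) / real (Suc k) \<le> real_of_int \<lfloor>real (Suc k) * s\<rfloor> / real (Suc k)"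
      by (rule divide_right_mono) simp
    moreover have "(real (Suc k) * s - 1) / real (Suc k) = s - 1 / real (Suc k)"
      by (simp add: diff_divide_distrib del: of_nat_Suc)
    ultimately show "s - 1 / real (Suc k) \<le> real_of_int \<lfloor>real (Suc k) * s\<rfloor> / real (Suc k)"
      by simp
  qed
  show "\<forall>\<^sub>F k in sequentially. real_of_int \<lfloor>real (Suc k) * s\<rfloor> / real (Suc k) \<le> s"
  proof (intro always_eventually allI)
    fix k
    have "real_of_int \<lfloor>real (Suc k) * s\<rfloor> \<le> real (Suc k) * s" by linarith
    hence "real_of_int \<lfloor>real (Suc k) * s\<rfloor> / real (Suc k) \<le> real (Suc k) * s / real (Suc k)"
      by (rule divide_right_mono) simp
    thus "real_of_int \<lfloor>real (Suc k) * s\<rfloor> / real (Suc k) \<le> s"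
      by (simp del: of_nat_Suc)
  qed
  have "(\<lambda>k. 1 / real (Suc k)) \<longlonglongrightarrow> 0" by (rule LIMSEQ_Suc[OF lim_const_over_n])
  thus "(\<lambda>k. s - 1 / real (Suc k)) \<longlonglongrightarrow> s" using tendsto_diff[OF tendsto_const, of _ 0 sequentially s] by simp
qed simp

lemma W_joint_meas:
  fixes W :: "real \<Rightarrow> 'a \<Rightarrow> real"
  assumes Wm: "\<And>t. t \<ge> 0 \<Longrightarrow> W t \<in> borel_measurable M"
    and Wc: "\<And>\<omega>. \<omega> \<in> space M \<Longrightarrow> continuous_on {0..} (\<lambda>t. W t \<omega>)"
    and u: "0 \<le> u"
  shows "(\<lambda>(s,\<omega>). indicator {u..u+h} s * (W s \<omega> - W u \<omega>)^2) \<in> borel_measurable (lborel \<Otimes>\<^sub>M M)"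
proof (rule borel_measurable_LIMSEQ_real)
  define g where "g k p = indicator {u..u+h} (fst p) *
      (W (max 0 (real_of_int \<lfloor>real (Suc k) * fst p\<rfloor> / real (Suc k))) (snd p) - W u (snd p))^2" for k p
  show "g k \<in> borel_measurable (lborel \<Otimes>\<^sub>M M)" for k
  proof -
    define F where "F j p = indicator {u..u+h} (fst p) *
      (W (max 0 (real_of_int j / real (Suc k))) (snd p) - W u (snd p))^2" for j :: int and p :: "real \<times> 'a"
    have "(\<lambda>p. F j p) \<in> borel_measurable (lborel \<Otimes>\<^sub>M M)" for j
    proof -
      have m1: "W (max 0 (real_of_int j / real (Suc k))) \<in> borel_measurable M" by (rule Wm) simp
      have m2: "W u \<in> borel_measurable M" by (rule Wm[OF u])
      show ?thesis unfolding F_def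
        using m1 m2 by measurable
    qed
    moreover have "(\<lambda>p. \<lfloor>real (Suc k) * fst p\<rfloor>) \<in> measurable (lborel \<Otimes>\<^sub>M M) (count_space UNIV)"
      by measurable
    ultimately have "(\<lambda>p. F \<lfloor>real (Suc k) * fst p\<rfloor> p) \<in> borel_measurable (lborel \<Otimes>\<^sub>M M)"
      by (rule measurable_compose_countable)
    moreover have "(\<lambda>p. F \<lfloor>real (Suc k) * fst p\<rfloor> p) = g k" unfolding F_def g_def by auto
    ultimately show ?thesis by simp
  qed
  fix p :: "real \<times> 'a" assume "p \<in> space (lborel \<Otimes>\<^sub>M M)"
  then obtain s \<omega> where p: "p = (s, \<omega>)" and \<omega>: "\<omega> \<in> space M" by (auto simp: space_pair_measure)
  show "(\<lambda>k. g k p) \<longlonglongrightarrow> (case p of (s, \<omega>) \<Rightarrow> indicator {u..u+h} s * (W s \<omega> - W u \<omega>)^2)"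
  proof (cases "s \<in> {u..u+h}")
    case False thus ?thesis unfolding g_def p by simp
  next
    case True
    hence s0: "0 \<le> s" using u by auto
    have lim: "(\<lambda>k. max 0 (real_of_int \<lfloor>real (Suc k) * s\<rfloor> / real (Suc k))) \<longlonglongrightarrow> max 0 s"
      by (intro tendsto_max tendsto_const floor_approx)
    have "(\<lambda>k. W (max 0 (real_of_int \<lfloor>real (Suc k) * s\<rfloor> / real (Suc k))) \<omega>) \<longlonglongrightarrow> W (max 0 s) \<omega>"
      by (rule continuous_on_tendsto_compose[OF Wc[OF \<omega>] lim]) auto
    hence "(\<lambda>k. W (max 0 (real_of_int \<lfloor>real (Suc k) * s\<rfloor> / real (Suc k))) \<omega>) \<longlonglongrightarrow> W s \<omega>"
      using s0 by simp
    hence "(\<lambda>k. indicator {u..u+h} s * (W (max 0 (real_of_int \<lfloor>real (Suc k) * s\<rfloor> / real (Suc k))) \<omega> - W u \<omega>)^2)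
        \<longlonglongrightarrow> indicator {u..u+h} s * (W s \<omega> - W u \<omega>)^2"
      by (intro tendsto_intros)
    thus ?thesis unfolding g_def p by simp
  qed
qed

lemma normal_incr_moment:
  assumes M: "prob_space M" and Y: "distributed M lborel Y (\<lambda>x. ennreal (normal_density 0 (sqrt d) x))"
    and d: "0 < d"
  shows "(\<integral>\<^sup>+\<omega>. ennreal ((Y \<omega>)^(2*m)) \<partial>M) = ennreal (fact (2*m) / ((2/d)^m * fact m))"
proof -
  have "(\<integral>\<^sup>+x. ennreal (normal_density 0 (sqrt d) x) * ennreal (x^(2*m)) \<partial>lborel) = (\<integral>\<^sup>+\<omega>. ennreal ((Y \<omega>)^(2*m)) \<partial>M)"
    by (rule distributed_nn_integral[OF Y]) simp
  moreover have "(\<integral>\<^sup>+x. ennreal (normal_density 0 (sqrt d) x) * ennreal (x^(2*m)) \<partial>lborel)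
      = (\<integral>\<^sup>+x. ennreal (normal_density 0 (sqrt d) x * (x - 0)^(2*m)) \<partial>lborel)"
    by (intro nn_integral_cong) (simp add: ennreal_mult' zero_le_even_power)
  moreover have "\<dots> = ennreal (fact (2*m) / ((2/(sqrt d)\<^sup>2)^m * fact m))"
  proof -
    have hb: "has_bochner_integral lborel (\<lambda>x. normal_density 0 (sqrt d) x * (x - 0) ^ (2 * m)) (fact (2 * m) / ((2 / (sqrt d)\<^sup>2)^m * fact m))"
      by (rule normal_moment_even) (use d in simp)
    show ?thesis
      by (rule nn_integral_eq_integral[OF integrable.intros[OF hb], 
          unfolded has_bochner_integral_integral_eq[OF hb]])
        (auto simp: zero_le_even_power)
  qed
  ultimately show ?thesis using d by simp
qed

lemma cont_bound:
  fixes g :: "real \<Rightarrow> real"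
  assumes "continuous_on {c..d} g"
  shows "\<exists>B. \<forall>s\<in>{c..d}. \<bar>g s\<bar> \<le> B"
proof -
  have "compact (g ` {c..d})" by (rule compact_continuous_image[OF assms]) simp
  then obtain B where "\<forall>y\<in>g ` {c..d}. norm y \<le> B"
    using compact_imp_bounded bounded_iff by metis
  thus ?thesis by auto
qed

lemma pathwise:
  fixes Xf Wf :: "real \<Rightarrow> real" and Nf :: "real \<Rightarrow> nat" and Zf :: "nat \<Rightarrow> real"
    and x0 a \<sigma> u h v :: real
  assumes SDE: "\<And>s. s \<ge> 0 \<Longrightarrow> Xf s = x0 - a * integral {0..s} Xf + (\<sigma> * Wf s + (\<Sum>k\<in>{1..Nf s}. Zf k))"
    and int: "\<And>s. s \<ge> 0 \<Longrightarrow> Xf integrable_on {0..s}"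
    and Wc: "continuous_on {0..} Wf"
    and Nmono: "\<And>s t. 0 \<le> s \<Longrightarrow> s \<le> t \<Longrightarrow> Nf s \<le> Nf t"
    and u: "0 \<le> u" and h: "0 < h" and a: "0 < a" and v: "0 < v"
    and ah: "a * h \<le> 1/8"
    and g1: "a * h * \<bar>Xf u\<bar> \<le> v/16"
    and g2: "a * \<bar>\<sigma>\<bar> * integral {u..u+h} (\<lambda>s. \<bar>Wf s - Wf u\<bar>) \<le> v/16"
    and g3: "\<bar>\<sigma>\<bar> * \<bar>Wf (u+h) - Wf u\<bar> \<le> v/8"
    and g4: "Nf (u+h) \<le> Nf u + 1"
    and g5: "Nf (u+h) = Nf u + 1 \<Longrightarrow> 2 * v \<le> \<bar>Zf (Nf u + 1)\<bar>"
  shows "(\<bar>Xf (u+h) - Xf u\<bar> \<le> v) \<longleftrightarrow> (real (Nf (u+h)) - real (Nf u) = 0)"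
proof -
  define J where "J s = (\<Sum>k\<in>{1..Nf s}. Zf k)" for s
  define k0 where "k0 = Nf u"
  define jump where "jump = (Nf (u+h) = k0 + 1)"
  define z where "z = (if jump then \<bar>Zf (k0+1)\<bar> else 0)"
  define I where "I s = integral {u..s} Xf" for s
  have z0: "0 \<le> z" by (simp add: z_def)
  have Nin: "Nf s = k0 \<or> (jump \<and> Nf s = k0 + 1)" if "s \<in> {u..u+h}" for s
  proof -
    have "k0 \<le> Nf s" "Nf s \<le> Nf (u+h)" using Nmono that u unfolding k0_def by auto
    thus ?thesis using g4 unfolding jump_def k0_def by linarith
  qed
  have Jb: "\<bar>J s - J u\<bar> \<le> z" if "s \<in> {u..u+h}" for s
  proof -
    have Ju: "J u = (\<Sum>k\<in>{1..k0}. Zf k)" by (simp add: J_def k0_def)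
    from Nin[OF that] show ?thesis
    proof
      assume "Nf s = k0" thus ?thesis using z0 by (simp add: J_def k0_def)
    next
      assume j: "jump \<and> Nf s = k0 + 1"
      have "{1..k0+1} = insert (k0+1) {1..k0}" by auto
      hence "J s = Zf (k0+1) + J u" using j by (simp add: J_def k0_def)
      thus ?thesis using j by (simp add: z_def)
    qed
  qed
  have Jend: "J (u+h) - J u = (if jump then Zf (k0+1) else 0)"
  proof -
    have Ju: "J u = (\<Sum>k\<in>{1..k0}. Zf k)" by (simp add: J_def k0_def)
    have "u+h \<in> {u..u+h}" using h by auto
    from Nin[OF this] show ?thesis
    proof
      assume "Nf (u+h) = k0" thus ?thesis by (simp add: J_def k0_def jump_def)
    next
      assume j: "jump \<and> Nf (u+h) = k0 + 1"
      have "{1..k0+1} = insert (k0+1) {1..k0}" by auto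
      thus ?thesis using j by (simp add: J_def k0_def)
    qed
  qed
  have intu: "Xf integrable_on {u..u+h}"
    using u h by (intro integrable_subinterval_real[OF int[of "u+h"]]) auto
  have eq: "Xf s = Xf u - a * I s + \<sigma> * (Wf s - Wf u) + (J s - J u)" if "s \<in> {u..u+h}" for s
  proof -
    have s0: "0 \<le> s" using that u by auto
    have "integral {0..u} Xf + integral {u..s} Xf = integral {0..s} Xf"
      using that u by (intro Henstock_Kurzweil_Integration.integral_combine int[OF s0]) auto
    hence "a * integral {0..s} Xf = a*integral{0..u} Xf + a*integral{u..s} Xf" by (metis distrib_left)
    thus ?thesis using SDE[OF s0] SDE[OF u] unfolding I_def J_def right_diff_distrib by linarith
  qed
  have Ic: "continuous_on {u..u+h} I" unfolding I_def by (rule indefinite_integral_continuous_1[OF intu])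
  have Wc': "continuous_on {u..u+h} Wf" using u by (intro continuous_on_subset[OF Wc]) auto
  obtain B1 where B1: "\<And>s. s\<in>{u..u+h} \<Longrightarrow> \<bar>I s\<bar> \<le> B1" using cont_bound[OF Ic] by blast
  obtain B2 where B2: "\<And>s. s\<in>{u..u+h} \<Longrightarrow> \<bar>Wf s\<bar> \<le> B2" using cont_bound[OF Wc'] by blast
  define BB where "BB = \<bar>Xf u\<bar> + a * B1 + \<bar>\<sigma>\<bar> * (B2 + \<bar>Wf u\<bar>) + z"
  have Xb: "\<bar>Xf s\<bar> \<le> BB" if "s \<in> {u..u+h}" for s
  proof -
    have "\<bar>Xf s\<bar> \<le> \<bar>Xf u\<bar> + a * \<bar>I s\<bar> + \<bar>\<sigma>\<bar> * \<bar>Wf s - Wf u\<bar> + \<bar>J s - J u\<bar>"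
    proof -
      have "\<bar>a * I s\<bar> = a * \<bar>I s\<bar>" "\<bar>\<sigma> * (Wf s - Wf u)\<bar> = \<bar>\<sigma>\<bar> * \<bar>Wf s - Wf u\<bar>"
        using a by (auto simp: abs_mult)
      thus ?thesis using eq[OF that] by linarith
    qed
    also have "\<dots> \<le> BB" unfolding BB_def
      using B1[OF that] B2[OF that] Jb[OF that] a
      by (intro add_mono mult_left_mono) auto
    finally show ?thesis .
  qed
  have absX: "(\<lambda>s. \<bar>Xf s\<bar>) integrable_on {u..u+h}"
  proof -
    have "Xf absolutely_integrable_on {u..u+h}"
      using Xb intu by (intro absolutely_integrable_integrable_bound[where g="\<lambda>_. BB"]) auto
    thus ?thesis unfolding absolutely_integrable_on_def by simp
  qed
  define Q where "Q = integral {u..u+h} (\<lambda>s. \<bar>Xf s\<bar>)"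
  have Q0: "0 \<le> Q" unfolding Q_def by (rule integral_nonneg[OF absX]) auto
  have IQ: "\<bar>I s\<bar> \<le> Q" if "s \<in> {u..u+h}" for s
  proof -
    have sub: "{u..s} \<subseteq> {u..u+h}" using that by auto
    have i1: "Xf integrable_on {u..s}" by (rule integrable_on_subinterval[OF intu sub])
    have i2: "(\<lambda>s. \<bar>Xf s\<bar>) integrable_on {u..s}" by (rule integrable_on_subinterval[OF absX sub])
    have "\<bar>I s\<bar> \<le> integral {u..s} (\<lambda>s. \<bar>Xf s\<bar>)"
      unfolding I_def using integral_norm_bound_integral[OF i1 i2] by simp
    also have "\<dots> \<le> Q" unfolding Q_def
      by (rule integral_subset_le[OF sub i2 absX]) auto
    finally show ?thesis .
  qed
  define IW where "IW = integral {u..u+h} (\<lambda>s. \<bar>Wf s - Wf u\<bar>)"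
  have Wint: "(\<lambda>s. \<bar>Wf s - Wf u\<bar>) integrable_on {u..u+h}"
    by (intro integrable_continuous_interval continuous_intros Wc')
  define c where "c = \<bar>Xf u\<bar> + a * Q + z"
  have hi: "((\<lambda>s. c + \<bar>\<sigma>\<bar> * \<bar>Wf s - Wf u\<bar>) has_integral (h * c + \<bar>\<sigma>\<bar> * IW)) {u..u+h}"
  proof -
    have "((\<lambda>s. c) has_integral h * c) {u..u+h}"
      using has_integral_const_real[of c u "u+h"] h by simp
    moreover have "((\<lambda>s. \<bar>\<sigma>\<bar> * \<bar>Wf s - Wf u\<bar>) has_integral \<bar>\<sigma>\<bar> * IW) {u..u+h}"
      unfolding IW_def using has_integral_mult_right[OF integrable_integral[OF Wint], of "\<bar>\<sigma>\<bar>"] by simp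
    ultimately show ?thesis by (rule has_integral_add)
  qed
  have Qle: "Q \<le> h * c + \<bar>\<sigma>\<bar> * IW"
  proof -
    have "Q \<le> integral {u..u+h} (\<lambda>s. c + \<bar>\<sigma>\<bar> * \<bar>Wf s - Wf u\<bar>)"
      unfolding Q_def
    proof (rule integral_le[OF absX])
      show "(\<lambda>s. c + \<bar>\<sigma>\<bar> * \<bar>Wf s - Wf u\<bar>) integrable_on {u..u+h}" using hi by blast
      fix s assume s: "s \<in> {u..u+h}"
      have "\<bar>a * I s\<bar> = a * \<bar>I s\<bar>" "\<bar>\<sigma> * (Wf s - Wf u)\<bar> = \<bar>\<sigma>\<bar> * \<bar>Wf s - Wf u\<bar>"
        using a by (auto simp: abs_mult)
      moreover have "a * \<bar>I s\<bar> \<le> a * Q" using IQ[OF s] a by simp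
      ultimately show "\<bar>Xf s\<bar> \<le> c + \<bar>\<sigma>\<bar> * \<bar>Wf s - Wf u\<bar>"
        using eq[OF s] Jb[OF s] unfolding c_def by linarith
    qed
    also have "\<dots> = h * c + \<bar>\<sigma>\<bar> * IW" using hi by (rule integral_unique)
    finally show ?thesis .
  qed
  have aQ: "a * Q \<le> (v + z) / 7"
  proof -
    have "a * Q \<le> a * (h * c + \<bar>\<sigma>\<bar> * IW)" using Qle a by simp
    also have "\<dots> = a * h * \<bar>Xf u\<bar> + (a * h) * (a * Q) + (a*h) * z + a * \<bar>\<sigma>\<bar> * IW"
      unfolding c_def by (simp add: algebra_simps)
    also have "\<dots> \<le> v/16 + (1/8) * (a * Q) + (1/8) * z + v/16"
      using g1 g2 ah Q0 z0 a unfolding IW_def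
      by (intro add_mono mult_right_mono) auto
    finally have "a * Q \<le> v/16 + (1/8) * (a * Q) + (1/8) * z + v/16" .
    moreover have "\<And>q::real. q \<le> v/16 + (1/8) * q + (1/8) * z + v/16 \<Longrightarrow> q \<le> (v + z) / 7"
      by (simp add: field_simps)
    ultimately show ?thesis by blast
  qed
  have IQe: "\<bar>a * I (u+h)\<bar> \<le> a * Q" using IQ[of "u+h"] h a by (simp add: abs_mult)
  have sW: "\<bar>\<sigma> * (Wf (u+h) - Wf u)\<bar> \<le> v/8" using g3 by (simp add: abs_mult)
  have eqe: "Xf (u+h) - Xf u = - a * I (u+h) + \<sigma> * (Wf (u+h) - Wf u) + (if jump then Zf (k0+1) else 0)"
    using eq[of "u+h"] h Jend by simp
  show ?thesis
  proof (cases jump)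
    case True
    hence zz: "z = \<bar>Zf (k0+1)\<bar>" "2 * v \<le> \<bar>Zf (k0+1)\<bar>" using g5 unfolding z_def jump_def k0_def by auto
    have "\<bar>Xf (u+h) - Xf u\<bar> \<ge> z - a * Q - v/8" using eqe True IQe sW zz by simp
    hence "\<not> \<bar>Xf (u+h) - Xf u\<bar> \<le> v" using aQ zz v by argo
    moreover have "real (Nf (u+h)) - real (Nf u) \<noteq> 0" using True unfolding jump_def k0_def by simp
    ultimately show ?thesis by simp
  next
    case False
    hence zz: "z = 0" by (simp add: z_def)
    have "u + h \<in> {u..u+h}" using h by simp
    from Nin[OF this] False have "Nf (u+h) = Nf u" by (simp add: k0_def)
    moreover have "\<bar>Xf (u+h) - Xf u\<bar> \<le> v" using eqe False IQe sW zz aQ v by simp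
    ultimately show ?thesis by simp
  qed
qed

lemma BM_incr_sq:
  assumes M: "prob_space M" and W: "std_brownian_motion M W" and us: "0 \<le> u" "u \<le> s"
  shows "(\<integral>\<^sup>+\<omega>. ennreal ((W s \<omega> - W u \<omega>)^2) \<partial>M) \<le> ennreal (s - u)"
proof (cases "u = s")
  case True thus ?thesis by simp
next
  case False
  hence d: "0 < s - u" using us by simp
  have Y: "distributed M lborel (\<lambda>\<omega>. W s \<omega> - W u \<omega>) (\<lambda>x. ennreal (normal_density 0 (sqrt (s - u)) x))"
    using W us False unfolding std_brownian_motion_def by auto
  from normal_incr_moment[OF M Y d, of 1] d show ?thesis by simp
qed

lemma B2_bound:
  assumes M: "prob_space M" and W: "std_brownian_motion M W" and u: "0 \<le> u" and h: "0 < h"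
  shows "(\<integral>\<^sup>+\<omega>. (\<integral>\<^sup>+s. ennreal (indicator {u..u+h} s * (W s \<omega> - W u \<omega>)^2) \<partial>lborel) \<partial>M) \<le> ennreal (h^2)"
proof -
  interpret prob_space M by (rule M)
  interpret pair_sigma_finite lborel M by unfold_locales
  have Wm: "\<And>t. t \<ge> 0 \<Longrightarrow> W t \<in> borel_measurable M" and Wc: "\<And>\<omega>. \<omega> \<in> space M \<Longrightarrow> continuous_on {0..} (\<lambda>t. W t \<omega>)"
    using W unfolding std_brownian_motion_def by auto
  have jm: "(\<lambda>(s,\<omega>). indicator {u..u+h} s * (W s \<omega> - W u \<omega>)^2) \<in> borel_measurable (lborel \<Otimes>\<^sub>M M)"
    by (rule W_joint_meas[OF Wm Wc u])
  have jm': "case_prod (\<lambda>s \<omega>. ennreal (indicator {u..u+h} s * (W s \<omega> - W u \<omega>)^2)) \<in> borel_measurable (lborel \<Otimes>\<^sub>M M)"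
    using measurable_compose[OF jm measurable_ennreal] by (simp add: split_beta')
  have "(\<integral>\<^sup>+\<omega>. (\<integral>\<^sup>+s. ennreal (indicator {u..u+h} s * (W s \<omega> - W u \<omega>)^2) \<partial>lborel) \<partial>M)
      = (\<integral>\<^sup>+s. (\<integral>\<^sup>+\<omega>. ennreal (indicator {u..u+h} s * (W s \<omega> - W u \<omega>)^2) \<partial>M) \<partial>lborel)"
    by (rule Fubini'[OF jm'])
  also have "\<dots> \<le> (\<integral>\<^sup>+s. ennreal h * indicator {u..u+h} s \<partial>lborel)"
  proof (rule nn_integral_mono)
    fix s
    show "(\<integral>\<^sup>+\<omega>. ennreal (indicator {u..u+h} s * (W s \<omega> - W u \<omega>)^2) \<partial>M) \<le> ennreal h * indicator {u..u+h} s"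
    proof (cases "s \<in> {u..u+h}")
      case True
      have "(\<integral>\<^sup>+\<omega>. ennreal (indicator {u..u+h} s * (W s \<omega> - W u \<omega>)^2) \<partial>M) = (\<integral>\<^sup>+\<omega>. ennreal ((W s \<omega> - W u \<omega>)^2) \<partial>M)"
        using True by simp
      also have "\<dots> \<le> ennreal (s - u)" by (rule BM_incr_sq[OF M W u]) (use True in auto)
      also have "\<dots> \<le> ennreal h" using True by (intro ennreal_leI) auto
      finally show ?thesis using True by simp
    qed simp
  qed
  also have "\<dots> = ennreal h * emeasure lborel {u..u+h}" by (rule nn_integral_cmult_indicator) simp
  also have "\<dots> = ennreal (h^2)" using h by (simp add: ennreal_mult'[symmetric] power2_eq_square)
  finally show ?thesis .
qed

lemma ennreal_integral_interval:
  fixes g :: "real \<Rightarrow> real"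
  assumes gc: "continuous_on {c..d} g" and g0: "\<And>s. 0 \<le> g s"
  shows "(\<integral>\<^sup>+s. ennreal (indicator {c..d} s * g s) \<partial>lborel) = ennreal (integral {c..d} g)"
proof -
  have gi: "(g has_integral integral {c..d} g) {c..d}"
    using integrable_continuous_interval[OF gc] by (simp add: has_integral_integral)
  have eqf: "(\<lambda>s. indicator {c..d} s * g s) = (\<lambda>s. if s \<in> {c..d} then g s else 0)"
    by (auto simp: indicator_def)
  have "(\<integral>\<^sup>+s. ennreal (indicator {c..d} s * g s) \<partial>lborel) = ennreal (integral {c..d} g)"
  proof (rule nn_integral_has_integral_lborel)
    show "(\<lambda>s. indicator {c..d} s * g s) \<in> borel_measurable borel"
      using borel_measurable_continuous_on_indicator[OF _ gc] by simp
    show "0 \<le> indicator {c..d} s * g s" for s using g0[of s] by simp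
    show "((\<lambda>s. indicator {c..d} s * g s) has_integral integral {c..d} g) UNIV"
      unfolding eqf has_integral_restrict_UNIV by (rule gi)
  qed
  thus ?thesis .
qed

lemma g2_link:
  fixes Wf :: "real \<Rightarrow> real"
  assumes Wc: "continuous_on {0..} Wf" and u: "0 \<le> u" and h: "0 < h" and a: "0 < a" and v: "0 < v"
    and S: "ennreal (\<sigma>^2) * (\<integral>\<^sup>+s. ennreal (indicator {u..u+h} s * (Wf s - Wf u)^2) \<partial>lborel) < ennreal (v^2/(256*a^2*h))"
  shows "a * \<bar>\<sigma>\<bar> * integral {u..u+h} (\<lambda>s. \<bar>Wf s - Wf u\<bar>) \<le> v/16"
proof (cases "\<sigma> = 0")
  case True thus ?thesis using v by simp
next
  case False
  have Dc: "continuous_on {u..u+h} (\<lambda>s. Wf s - Wf u)"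
    using u by (intro continuous_intros continuous_on_subset[OF Wc]) auto
  have D2c: "continuous_on {u..u+h} (\<lambda>s. (Wf s - Wf u)^2)" by (intro continuous_intros Dc)
  define SI where "SI = integral {u..u+h} (\<lambda>s. (Wf s - Wf u)^2)"
  have SI0: "0 \<le> SI" unfolding SI_def
    by (rule integral_nonneg[OF integrable_continuous_interval[OF D2c]]) simp
  have "(\<integral>\<^sup>+s. ennreal (indicator {u..u+h} s * (Wf s - Wf u)^2) \<partial>lborel) = ennreal SI"
    unfolding SI_def by (rule ennreal_integral_interval[OF D2c]) simp
  with S have "ennreal (\<sigma>^2 * SI) < ennreal (v^2/(256*a^2*h))" by (simp add: ennreal_mult SI0)
  hence S1: "\<sigma>^2 * SI < v^2/(256*a^2*h)" using SI0 by (subst (asm) ennreal_less_iff) auto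
  define x where "x = v / (16 * a * \<bar>\<sigma>\<bar>)"
  have x0: "0 < x" using v a False by (simp add: x_def)
  have hSI: "h * SI < x^2"
  proof -
    have "\<sigma>^2 * (h * SI) < \<sigma>^2 * x^2"
    proof -
      have "\<sigma>^2 * (h * SI) = h * (\<sigma>^2 * SI)" by simp
      also have "\<dots> < h * (v^2/(256*a^2*h))" using S1 h by (intro mult_strict_left_mono) auto
      also have "\<dots> = \<sigma>^2 * x^2" using h a False unfolding x_def by (simp add: field_simps power2_eq_square)
      finally show ?thesis .
    qed
    thus ?thesis using False by simp
  qed
  have Iabs: "(\<lambda>s. \<bar>Wf s - Wf u\<bar>) integrable_on {u..u+h}"
    by (intro integrable_continuous_interval continuous_intros Dc)
  have young: "\<bar>Wf s - Wf u\<bar> \<le> x/(2*h) + (h/(2*x)) * (Wf s - Wf u)^2" for s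
  proof -
    define d where "d = \<bar>Wf s - Wf u\<bar>"
    have "0 \<le> (d - x/h)^2" by simp
    hence "2 * d * (x/h) \<le> d^2 + (x/h)^2" by (simp add: power2_eq_square algebra_simps)
    hence "(2 * d * (x/h)) * (h/(2*x)) \<le> (d^2 + (x/h)^2) * (h/(2*x))"
      using h x0 by (intro mult_right_mono) auto
    moreover have "(2 * d * (x/h)) * (h/(2*x)) = d" using h x0 by (simp add: field_simps)
    moreover have "(d^2 + (x/h)^2) * (h/(2*x)) = x/(2*h) + (h/(2*x)) * d^2"
      using h x0 by (simp add: field_simps power2_eq_square)
    moreover have "d^2 = (Wf s - Wf u)^2" by (simp add: d_def)
    ultimately show ?thesis by (simp add: d_def)
  qed
  have "integral {u..u+h} (\<lambda>s. \<bar>Wf s - Wf u\<bar>) \<le> integral {u..u+h} (\<lambda>s. x/(2*h) + (h/(2*x)) * (Wf s - Wf u)^2)"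
  proof (rule integral_le[OF Iabs])
    show "(\<lambda>s. x/(2*h) + (h/(2*x)) * (Wf s - Wf u)^2) integrable_on {u..u+h}"
      by (intro integrable_continuous_interval continuous_intros Dc)
  qed (rule young)
  also have "\<dots> = x/2 + (h/(2*x)) * SI"
  proof -
    have i2: "(\<lambda>s. (Wf s - Wf u)^2) integrable_on {u..u+h}" by (rule integrable_continuous_interval[OF D2c])
    have "integral {u..u+h} (\<lambda>s. x/(2*h) + (h/(2*x)) * (Wf s - Wf u)^2)
        = integral {u..u+h} (\<lambda>s. x/(2*h)) + integral {u..u+h} (\<lambda>s. (h/(2*x)) * (Wf s - Wf u)^2)"
      using x0 by (intro integral_add) (auto intro!: integrable_continuous_interval continuous_intros Dc)
    also have "\<dots> = x/2 + (h/(2*x)) * SI" using h unfolding SI_def by simp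
    finally show ?thesis .
  qed
  also have "\<dots> < x/2 + x/2"
  proof -
    have "(h/(2*x)) * SI = (h * SI) / (2*x)" by simp
    also have "\<dots> < x^2 / (2*x)" using hSI x0 by (intro divide_strict_right_mono) auto
    also have "\<dots> = x/2" using x0 by (simp add: power2_eq_square)
    finally have "(h/(2*x)) * SI < x/2" .
    thus ?thesis by linarith
  qed
  finally have "integral {u..u+h} (\<lambda>s. \<bar>Wf s - Wf u\<bar>) < x" by simp
  hence "a * \<bar>\<sigma>\<bar> * integral {u..u+h} (\<lambda>s. \<bar>Wf s - Wf u\<bar>) < a * \<bar>\<sigma>\<bar> * x"
    using a False by simp
  also have "a * \<bar>\<sigma>\<bar> * x = v/16" using a False unfolding x_def by simp
  finally show ?thesis by simp
qed

lemma nat_diff_meas: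
  assumes f: "f \<in> measurable M (count_space UNIV)" and g: "g \<in> measurable M (count_space UNIV)"
  shows "(\<lambda>\<omega>. (f \<omega> :: nat) - g \<omega>) \<in> measurable M (count_space UNIV)"
proof -
  have "(\<lambda>\<omega>. (\<lambda>j \<omega>. j - g \<omega>) (f \<omega>) \<omega>) \<in> measurable M (count_space UNIV)"
  proof (rule measurable_compose_countable[OF _ f])
    fix j :: nat
    show "(\<lambda>\<omega>. j - g \<omega>) \<in> measurable M (count_space UNIV)"
    proof -
      have "(\<lambda>\<omega>. (\<lambda>i \<omega>. j - i) (g \<omega>) \<omega>) \<in> measurable M (count_space UNIV)"
        by (rule measurable_compose_countable[OF _ g]) simp
      thus ?thesis by simp
    qed
  qed
  thus ?thesis by simp
qed

lemma poisson_facts: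
  assumes M: "prob_space M" and N: "poisson_process M lam N" and u: "0 \<le> u" and h: "0 \<le> h"
  shows "(\<lambda>\<omega>. N (u+h) \<omega> - N u \<omega>) \<in> measurable M (count_space UNIV)"
    and "measure M {\<omega>\<in>space M. N (u+h) \<omega> - N u \<omega> = k} = exp (- lam * h) * (lam * h) ^ k / fact k"
proof -
  have m: "N t \<in> measurable M (count_space UNIV)" if "t \<ge> 0" for t using N that unfolding poisson_process_def by auto
  show "(\<lambda>\<omega>. N (u+h) \<omega> - N u \<omega>) \<in> measurable M (count_space UNIV)"
    by (rule nat_diff_meas[OF m m]) (use u h in auto)
  show "measure M {\<omega>\<in>space M. N (u+h) \<omega> - N u \<omega> = k} = exp (- lam * h) * (lam * h) ^ k / fact k"
  proof -
    have "\<forall>s t (k::nat). 0 \<le> s \<and> s \<le> t \<longrightarrow>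
        measure M {\<omega>\<in>space M. N t \<omega> - N s \<omega> = k} = exp (- lam * (t - s)) * (lam * (t - s)) ^ k / fact k"
      using N unfolding poisson_process_def by blast
    hence "0 \<le> u \<and> u \<le> u+h \<longrightarrow> measure M {\<omega>\<in>space M. N (u+h) \<omega> - N u \<omega> = k} = exp (- lam * ((u+h) - u)) * (lam * ((u+h) - u)) ^ k / fact k"
      by (rule spec[where x=u, THEN spec[where x="u+h"], THEN spec[where x=k]])
    hence "measure M {\<omega>\<in>space M. N (u+h) \<omega> - N u \<omega> = k} = exp (- lam * ((u+h) - u)) * (lam * ((u+h) - u)) ^ k / fact k"
      using u h by linarith
    thus ?thesis by simp
  qed
qed

lemma exp_ineq: "0 \<le> (x::real) \<Longrightarrow> 1 - exp (-x) - exp (-x) * x \<le> x^2"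
proof -
  assume x: "0 \<le> x"
  have "1 - x \<le> exp (-x)" using exp_ge_add_one_self[of "-x"] by simp
  hence "(1 - x) * (1 + x) \<le> exp (-x) * (1 + x)" using x by (intro mult_right_mono) auto
  thus ?thesis by (simp add: algebra_simps power2_eq_square)
qed

lemma poisson_ge2:
  assumes M: "prob_space M" and N: "poisson_process M lam N" and u: "0 \<le> u" and h: "0 \<le> h" and lam: "0 \<le> lam"
  shows "measure M {\<omega>\<in>space M. 2 \<le> N (u+h) \<omega> - N u \<omega>} \<le> (lam * h)^2"
proof -
  interpret prob_space M by (rule M)
  note pf = poisson_facts[OF M N u h]
  define D where "D \<omega> = N (u+h) \<omega> - N u \<omega>" for \<omega>
  have Dm: "D \<in> measurable M (count_space UNIV)" unfolding D_def by (rule pf(1))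
  have ev: "{\<omega>\<in>space M. P (D \<omega>)} \<in> events" for P
  proof -
    have "{\<omega>\<in>space M. P (D \<omega>)} = D -` {k. P k} \<inter> space M" by auto
    thus ?thesis using measurable_sets[OF Dm, of "{k. P k}"] by simp
  qed
  have "prob {\<omega>\<in>space M. 2 \<le> D \<omega>} = prob (space M - {\<omega>\<in>space M. D \<omega> < 2})"
    by (rule arg_cong[where f=prob]) auto
  also have "\<dots> = 1 - prob {\<omega>\<in>space M. D \<omega> < 2}" by (rule prob_compl[OF ev])
  also have "prob {\<omega>\<in>space M. D \<omega> < 2} = prob ({\<omega>\<in>space M. D \<omega> = 0} \<union> {\<omega>\<in>space M. D \<omega> = 1})"
    by (rule arg_cong[where f=prob]) auto
  also have "\<dots> = prob {\<omega>\<in>space M. D \<omega> = 0} + prob {\<omega>\<in>space M. D \<omega> = 1}"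
    by (rule finite_measure_Union[OF ev ev]) auto
  also have "\<dots> = exp (- lam * h) + exp (- lam * h) * (lam * h)"
    using pf(2)[of 0] pf(2)[of 1] unfolding D_def by simp
  finally have "prob {\<omega>\<in>space M. 2 \<le> D \<omega>} = 1 - exp (- (lam * h)) - exp (- (lam * h)) * (lam * h)" by simp
  also have "\<dots> \<le> (lam * h)^2" by (rule exp_ineq) (use lam h in simp)
  finally show ?thesis unfolding D_def .
qed

lemma indep_NZ:
  fixes X0 :: "'a \<Rightarrow> real" and W :: "real \<Rightarrow> 'a \<Rightarrow> real" and N :: "real \<Rightarrow> 'a \<Rightarrow> nat" and Z :: "nat \<Rightarrow> 'a \<Rightarrow> real"
  assumes M: "prob_space M"
    and indep: "prob_space.indep_sets M
        (\<lambda>j::nat. if j = 0 then gen_sigma M borel (\<lambda>_::unit. X0) UNIV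
                 else if j = 1 then gen_sigma M borel W {0..}
                 else if j = 2 then gen_sigma M (count_space UNIV) N {0..}
                 else gen_sigma M borel Z UNIV) {0..3}"
    and E: "E \<in> gen_sigma M (count_space UNIV) N {0..}" and G: "G \<in> gen_sigma M borel Z UNIV"
  shows "measure M (E \<inter> G) = measure M E * measure M G"
proof -
  interpret prob_space M by (rule M)
  define A where "A j = (if j = (2::nat) then E else G)" for j
  have "prob (\<Inter>j\<in>{2,3}. A j) = (\<Prod>j\<in>{2,3}. prob (A j))"
    by (rule indep_setsD[OF indep]) (auto simp: A_def E G)
  thus ?thesis by (simp add: A_def Int_commute)
qed

lemma gen_sigma_basic:
  assumes "i \<in> I" "B \<in> sets N'"
  shows "X i -` B \<inter> space M \<in> gen_sigma M N' X I"
  unfolding gen_sigma_def using assms by (intro sigma_sets.Basic) blast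

lemma gen_sigma_Int:
  assumes "A \<in> gen_sigma M N' X I" "B \<in> gen_sigma M N' X I"
  shows "A \<inter> B \<in> gen_sigma M N' X I"
proof -
  interpret sigma_algebra "space M" "gen_sigma M N' X I"
    unfolding gen_sigma_def by (rule sigma_algebra_sigma_sets) auto
  show ?thesis using assms by (rule Int)
qed

lemma jump_small:
  fixes X0 :: "'a \<Rightarrow> real" and W :: "real \<Rightarrow> 'a \<Rightarrow> real" and N :: "real \<Rightarrow> 'a \<Rightarrow> nat" and Z :: "nat \<Rightarrow> 'a \<Rightarrow> real"
  assumes M: "prob_space M" and N: "poisson_process M lam N" and lam: "0 \<le> lam"
    and Zm: "\<And>k. Z k \<in> borel_measurable M" and Zd: "\<And>k. distr M borel (Z k) = F"
    and indep: "prob_space.indep_sets M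
        (\<lambda>j::nat. if j = 0 then gen_sigma M borel (\<lambda>_::unit. X0) UNIV
                 else if j = 1 then gen_sigma M borel W {0..}
                 else if j = 2 then gen_sigma M (count_space UNIV) N {0..}
                 else gen_sigma M borel Z UNIV) {0..3}"
    and u: "0 \<le> u" and h: "0 \<le> h" and B: "B \<in> sets borel"
  shows "measure M {\<omega>\<in>space M. N (u+h) \<omega> - N u \<omega> = 1 \<and> Z (N u \<omega> + 1) \<omega> \<in> B} \<le> lam * h * measure F B"
proof -
  interpret prob_space M by (rule M)
  note pf = poisson_facts[OF M N u h]
  have Nm: "N t \<in> measurable M (count_space UNIV)" if "t \<ge> 0" for t using N that unfolding poisson_process_def by auto
  define E where "E k = {\<omega>\<in>space M. N u \<omega> = k \<and> N (u+h) \<omega> - N u \<omega> = 1}" for k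
  define G where "G k = Z (k+1) -` B \<inter> space M" for k
  have E_eq: "E k = (N u -` {k} \<inter> space M) \<inter> (N (u+h) -` {k+1} \<inter> space M)" for k
    unfolding E_def by auto
  have Eg: "E k \<in> gen_sigma M (count_space UNIV) N {0..}" for k
    unfolding E_eq by (intro gen_sigma_Int gen_sigma_basic) (use u h in auto)
  have Gg: "G k \<in> gen_sigma M borel Z UNIV" for k
    unfolding G_def by (intro gen_sigma_basic B) auto
  have Eev: "E k \<in> events" for k
    unfolding E_eq using measurable_sets[OF Nm[OF u], of "{k}"] measurable_sets[OF Nm, of "u+h" "{k+1}"] u h by auto
  have Gev: "G k \<in> events" for k unfolding G_def using measurable_sets[OF Zm B] .
  have PG: "prob (G k) = measure F B" for k
  proof -
    have "measure F B = measure (distr M borel (Z (k+1))) B" using Zd by simp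
    also have "\<dots> = prob (G k)" unfolding G_def using B Zm by (simp add: measure_distr)
    finally show ?thesis by simp
  qed
  have set_eq: "{\<omega>\<in>space M. N (u+h) \<omega> - N u \<omega> = 1 \<and> Z (N u \<omega> + 1) \<omega> \<in> B} = (\<Union>k. E k \<inter> G k)"
    unfolding E_def G_def by auto
  have set_eq2: "{\<omega>\<in>space M. N (u+h) \<omega> - N u \<omega> = 1} = (\<Union>k. E k)"
    unfolding E_def by auto
  have dE: "disjoint_family E" unfolding disjoint_family_on_def E_def by auto
  have dEG: "disjoint_family (\<lambda>k. E k \<inter> G k)" using dE unfolding disjoint_family_on_def by auto
  have s1: "(\<lambda>k. prob (E k \<inter> G k)) sums prob (\<Union>k. E k \<inter> G k)"
    by (rule finite_measure_UNION[OF _ dEG]) (use Eev Gev in auto)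
  have s2: "(\<lambda>k. prob (E k)) sums prob (\<Union>k. E k)"
    by (rule finite_measure_UNION[OF _ dE]) (use Eev in auto)
  have "(\<lambda>k. prob (E k \<inter> G k)) = (\<lambda>k. prob (E k) * measure F B)"
    using indep_NZ[OF M indep Eg Gg] PG by auto
  with s1 have "(\<lambda>k. prob (E k) * measure F B) sums prob (\<Union>k. E k \<inter> G k)" by simp
  moreover have "(\<lambda>k. prob (E k) * measure F B) sums (prob (\<Union>k. E k) * measure F B)"
    by (rule sums_mult2[OF s2])
  ultimately have "prob (\<Union>k. E k \<inter> G k) = prob (\<Union>k. E k) * measure F B" by (rule sums_unique2)
  also have "prob (\<Union>k. E k) = exp (- lam * h) * (lam * h)"
    using pf(2)[of 1] set_eq2 by simp
  also have "exp (- lam * h) * (lam * h) * measure F B \<le> lam * h * measure F B"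
  proof -
    have "exp (- lam * h) \<le> 1" using lam h by simp
    hence "exp (- lam * h) * (lam * h) \<le> 1 * (lam * h)" using lam h by (intro mult_right_mono) auto
    thus ?thesis by (intro mult_right_mono) auto
  qed
  finally show ?thesis using set_eq by simp
qed

lemma BM_tail:
  assumes M: "prob_space M" and W: "std_brownian_motion M W" and u: "0 \<le> u" and h: "0 < h" and y: "0 < y"
    and m: "1 \<le> m"
  shows "measure M {\<omega>\<in>space M. y < \<bar>\<sigma>\<bar> * \<bar>W (u+h) \<omega> - W u \<omega>\<bar>}
    \<le> fact (2*m) / ((2/h)^m * fact m) * (\<bar>\<sigma>\<bar>/y)^(2*m)"
proof (cases "\<sigma> = 0")
  case True thus ?thesis using y m by (simp add: power_0_left)
next
  case False
  interpret prob_space M by (rule M)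
  have Y: "distributed M lborel (\<lambda>\<omega>. W (u+h) \<omega> - W u \<omega>) (\<lambda>x. ennreal (normal_density 0 (sqrt ((u+h) - u)) x))"
  proof -
    have "\<forall>s t. 0 \<le> s \<and> s < t \<longrightarrow>
        distributed M lborel (\<lambda>\<omega>. W t \<omega> - W s \<omega>) (\<lambda>x. ennreal (normal_density 0 (sqrt (t - s)) x))"
      using W unfolding std_brownian_motion_def by blast
    hence "distributed M lborel (\<lambda>\<omega>. W (u+h) \<omega> - W u \<omega>) (\<lambda>x. ennreal (normal_density 0 (sqrt ((u+h) - u)) x))"
      using u h by (metis less_add_same_cancel1)
    thus ?thesis by simp
  qed
  hence Y': "distributed M lborel (\<lambda>\<omega>. W (u+h) \<omega> - W u \<omega>) (\<lambda>x. ennreal (normal_density 0 (sqrt h) x))" by simp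
  have Wm: "W t \<in> borel_measurable M" if "t \<ge> 0" for t using W that unfolding std_brownian_motion_def by auto
  have fm: "(\<lambda>\<omega>. (W (u+h) \<omega> - W u \<omega>)^(2*m)) \<in> borel_measurable M"
  proof -
    have [measurable]: "W (u+h) \<in> borel_measurable M" "W u \<in> borel_measurable M" using Wm u h by auto
    show ?thesis by measurable
  qed
  define c where "c = (y / \<bar>\<sigma>\<bar>)^(2*m)"
  have c0: "0 < c" using y False by (simp add: c_def)
  have mom: "(\<integral>\<^sup>+\<omega>. ennreal ((W (u+h) \<omega> - W u \<omega>)^(2*m)) \<partial>M) \<le> ennreal (fact (2*m) / ((2/h)^m * fact m))"
    using normal_incr_moment[OF M Y' h, of m] by simp
  have "measure M {\<omega>\<in>space M. y < \<bar>\<sigma>\<bar> * \<bar>W (u+h) \<omega> - W u \<omega>\<bar>}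
      \<le> measure M {\<omega>\<in>space M. c \<le> (W (u+h) \<omega> - W u \<omega>)^(2*m)}"
  proof (rule finite_measure_mono)
    show "{\<omega>\<in>space M. c \<le> (W (u+h) \<omega> - W u \<omega>)^(2*m)} \<in> sets M" using fm by measurable
    show "{\<omega>\<in>space M. y < \<bar>\<sigma>\<bar> * \<bar>W (u+h) \<omega> - W u \<omega>\<bar>} \<subseteq> {\<omega>\<in>space M. c \<le> (W (u+h) \<omega> - W u \<omega>)^(2*m)}"
    proof safe
      fix \<omega> assume "y < \<bar>\<sigma>\<bar> * \<bar>W (u+h) \<omega> - W u \<omega>\<bar>"
      hence "y / \<bar>\<sigma>\<bar> < \<bar>W (u+h) \<omega> - W u \<omega>\<bar>" using False by (simp add: field_simps)
      hence "(y / \<bar>\<sigma>\<bar>)^(2*m) \<le> \<bar>W (u+h) \<omega> - W u \<omega>\<bar>^(2*m)" using y False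
        by (intro power_mono) auto
      thus "c \<le> (W (u+h) \<omega> - W u \<omega>)^(2*m)" unfolding c_def by (simp add: power_even_abs)
    qed
  qed
  also have "\<dots> \<le> fact (2*m) / ((2/h)^m * fact m) / c"
    by (rule markov_real[OF M fm _ mom c0]) (use h in \<open>auto simp: zero_le_even_power\<close>)
  also have "\<dots> = fact (2*m) / ((2/h)^m * fact m) * (\<bar>\<sigma>\<bar>/y)^(2*m)"
    unfolding c_def by (simp add: power_divide)
  finally show ?thesis .
qed

lemma X_tail:
  assumes M: "prob_space M" and Xm: "Y \<in> borel_measurable M"
    and C: "(\<integral>\<^sup>+\<omega>. ennreal ((Y \<omega>)^2) \<partial>M) \<le> ennreal C" and C0: "0 \<le> C" and y: "0 < y"
  shows "measure M {\<omega>\<in>space M. y < \<bar>Y \<omega>\<bar>} \<le> C / y^2"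
proof -
  interpret prob_space M by (rule M)
  have fm: "(\<lambda>\<omega>. (Y \<omega>)^2) \<in> borel_measurable M" using Xm by measurable
  have "measure M {\<omega>\<in>space M. y < \<bar>Y \<omega>\<bar>} \<le> measure M {\<omega>\<in>space M. y^2 \<le> (Y \<omega>)^2}"
  proof (rule finite_measure_mono)
    show "{\<omega>\<in>space M. y^2 \<le> (Y \<omega>)^2} \<in> sets M" using fm by measurable
    show "{\<omega>\<in>space M. y < \<bar>Y \<omega>\<bar>} \<subseteq> {\<omega>\<in>space M. y^2 \<le> (Y \<omega>)^2}"
    proof safe
      fix \<omega> assume "y < \<bar>Y \<omega>\<bar>"
      hence "y^2 \<le> \<bar>Y \<omega>\<bar>^2" using y by (intro power_mono) auto
      thus "y^2 \<le> (Y \<omega>)^2" by simp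
    qed
  qed
  also have "\<dots> \<le> C / y^2"
    by (rule markov_real[OF M fm _ C]) (use y C0 in auto)
  finally show ?thesis .
qed

lemma B2_prob:
  assumes M: "prob_space M" and W: "std_brownian_motion M W" and u: "0 \<le> u" and h: "0 < h" and c: "0 < c"
  shows "{\<omega>\<in>space M. ennreal c \<le> ennreal (\<sigma>^2) * (\<integral>\<^sup>+s. ennreal (indicator {u..u+h} s * (W s \<omega> - W u \<omega>)^2) \<partial>lborel)} \<in> sets M"
    and "measure M {\<omega>\<in>space M. ennreal c \<le> ennreal (\<sigma>^2) * (\<integral>\<^sup>+s. ennreal (indicator {u..u+h} s * (W s \<omega> - W u \<omega>)^2) \<partial>lborel)}
      \<le> \<sigma>^2 * h^2 / c"
proof -
  interpret prob_space M by (rule M)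
  define S where "S \<omega> = (\<integral>\<^sup>+s. ennreal (indicator {u..u+h} s * (W s \<omega> - W u \<omega>)^2) \<partial>lborel)" for \<omega>
  have Wm: "\<And>t. t \<ge> 0 \<Longrightarrow> W t \<in> borel_measurable M" and Wc: "\<And>\<omega>. \<omega> \<in> space M \<Longrightarrow> continuous_on {0..} (\<lambda>t. W t \<omega>)"
    using W unfolding std_brownian_motion_def by auto
  have jm: "(\<lambda>(s,\<omega>). indicator {u..u+h} s * (W s \<omega> - W u \<omega>)^2) \<in> borel_measurable (lborel \<Otimes>\<^sub>M M)"
    by (rule W_joint_meas[OF Wm Wc u])
  have jm2: "(\<lambda>(\<omega>,s). ennreal (indicator {u..u+h} s * (W s \<omega> - W u \<omega>)^2)) \<in> borel_measurable (M \<Otimes>\<^sub>M lborel)"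
  proof -
    have "(\<lambda>(s,\<omega>). ennreal (indicator {u..u+h} s * (W s \<omega> - W u \<omega>)^2)) \<in> borel_measurable (lborel \<Otimes>\<^sub>M M)"
      using measurable_compose[OF jm measurable_ennreal] by (simp add: split_beta')
    thus ?thesis by (subst measurable_pair_swap_iff) simp
  qed
  have Sm: "S \<in> borel_measurable M"
    unfolding S_def by (rule lborel.borel_measurable_nn_integral) (use jm2 in simp)
  have gm: "(\<lambda>\<omega>. ennreal (\<sigma>^2) * S \<omega>) \<in> borel_measurable M" using Sm by measurable
  show ms: "{\<omega>\<in>space M. ennreal c \<le> ennreal (\<sigma>^2) * S \<omega>} \<in> sets M" using gm by measurable
  have "emeasure M {\<omega>\<in>space M. ennreal c \<le> ennreal (\<sigma>^2) * S \<omega>}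
      \<le> emeasure M {\<omega>\<in>space M. 1 \<le> ennreal (1/c) * (ennreal (\<sigma>^2) * S \<omega>)}"
  proof (rule emeasure_mono)
    show "{\<omega>\<in>space M. 1 \<le> ennreal (1/c) * (ennreal (\<sigma>^2) * S \<omega>)} \<in> sets M" using gm by measurable
    show "{\<omega>\<in>space M. ennreal c \<le> ennreal (\<sigma>^2) * S \<omega>} \<subseteq> {\<omega>\<in>space M. 1 \<le> ennreal (1/c) * (ennreal (\<sigma>^2) * S \<omega>)}"
    proof safe
      fix \<omega> assume "ennreal c \<le> ennreal (\<sigma>^2) * S \<omega>"
      hence "ennreal (1/c) * ennreal c \<le> ennreal (1/c) * (ennreal (\<sigma>^2) * S \<omega>)" by (rule mult_left_mono) simp
      moreover have "ennreal (1/c) * ennreal c = 1" using c by (simp add: ennreal_mult'[symmetric])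
      ultimately show "1 \<le> ennreal (1/c) * (ennreal (\<sigma>^2) * S \<omega>)" by simp
    qed
  qed
  also have "\<dots> \<le> ennreal (1/c) * (\<integral>\<^sup>+\<omega>. ennreal (\<sigma>^2) * S \<omega> * indicator (space M) \<omega> \<partial>M)"
    by (rule nn_integral_Markov_inequality) (use gm in auto)
  also have "(\<integral>\<^sup>+\<omega>. ennreal (\<sigma>^2) * S \<omega> * indicator (space M) \<omega> \<partial>M) = ennreal (\<sigma>^2) * (\<integral>\<^sup>+\<omega>. S \<omega> \<partial>M)"
  proof -
    have "(\<integral>\<^sup>+\<omega>. ennreal (\<sigma>^2) * S \<omega> * indicator (space M) \<omega> \<partial>M) = (\<integral>\<^sup>+\<omega>. ennreal (\<sigma>^2) * S \<omega> \<partial>M)"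
      by (intro nn_integral_cong) auto
    also have "\<dots> = ennreal (\<sigma>^2) * (\<integral>\<^sup>+\<omega>. S \<omega> \<partial>M)" by (rule nn_integral_cmult[OF Sm])
    finally show ?thesis .
  qed
  also have "ennreal (1/c) * (ennreal (\<sigma>^2) * (\<integral>\<^sup>+\<omega>. S \<omega> \<partial>M)) \<le> ennreal (1/c) * (ennreal (\<sigma>^2) * ennreal (h^2))"
    using B2_bound[OF M W u h] unfolding S_def by (intro mult_left_mono) auto
  also have "\<dots> = ennreal (\<sigma>^2 * h^2 / c)" using c by (simp add: ennreal_mult'[symmetric] ennreal_mult[symmetric])
  finally have "emeasure M {\<omega>\<in>space M. ennreal c \<le> ennreal (\<sigma>^2) * S \<omega>} \<le> ennreal (\<sigma>^2 * h^2 / c)" .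
  thus "measure M {\<omega>\<in>space M. ennreal c \<le> ennreal (\<sigma>^2) * S \<omega>} \<le> \<sigma>^2 * h^2 / c"
    using c by (simp add: emeasure_eq_measure)
qed

lemma pow_div_powr: "0 < (D::real) \<Longrightarrow> D^k / (D powr \<beta>)^j = D powr (real k - real j * \<beta>)"
proof -
  assume D: "0 < D"
  have a: "(D powr \<beta>)^j = D powr (real j * \<beta>)" by (rule powr_power) (use D in simp)
  have b: "D^k = D powr real k" using D by (simp add: powr_realpow)
  show ?thesis unfolding a b powr_diff ..
qed

lemma powr_anti: "0 < (x::real) \<Longrightarrow> x \<le> 1 \<Longrightarrow> a \<le> b \<Longrightarrow> x powr b \<le> x powr a"
proof -
  assume x: "0 < x" "x \<le> 1" and ab: "a \<le> b"
  have "ln x \<le> 0" using x by simp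
  hence "b * ln x \<le> a * ln x" using ab by (simp add: mult_right_mono_neg)
  thus ?thesis using x by (simp add: powr_def)
qed

definition badset :: "'a measure \<Rightarrow> (real \<Rightarrow> 'a \<Rightarrow> real) \<Rightarrow> (real \<Rightarrow> 'a \<Rightarrow> real) \<Rightarrow> (real \<Rightarrow> 'a \<Rightarrow> nat)
    \<Rightarrow> (nat \<Rightarrow> 'a \<Rightarrow> real) \<Rightarrow> real \<Rightarrow> real \<Rightarrow> real \<Rightarrow> real \<Rightarrow> real \<Rightarrow> 'a set" where
  "badset M X W N Z a \<sigma> v u h =
     {\<omega>\<in>space M. v/(16*a*h) < \<bar>X u \<omega>\<bar>}
   \<union> {\<omega>\<in>space M. ennreal (v^2/(256*a^2*h)) \<le> ennreal (\<sigma>^2) * (\<integral>\<^sup>+s. ennreal (indicator {u..u+h} s * (W s \<omega> - W u \<omega>)^2) \<partial>lborel)}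
   \<union> {\<omega>\<in>space M. v/8 < \<bar>\<sigma>\<bar> * \<bar>W (u+h) \<omega> - W u \<omega>\<bar>}
   \<union> {\<omega>\<in>space M. 2 \<le> N (u+h) \<omega> - N u \<omega>}
   \<union> {\<omega>\<in>space M. N (u+h) \<omega> - N u \<omega> = 1 \<and> Z (N u \<omega> + 1) \<omega> \<in> {-2* v<..<2* v}}"

lemma bad_bound:
  fixes X0 :: "'a \<Rightarrow> real" and W :: "real \<Rightarrow> 'a \<Rightarrow> real" and N :: "real \<Rightarrow> 'a \<Rightarrow> nat" and Z :: "nat \<Rightarrow> 'a \<Rightarrow> real"
  assumes M: "prob_space M" and W: "std_brownian_motion M W" and N: "poisson_process M lam N" and lam: "0 \<le> lam"
    and Zm: "\<And>k. Z k \<in> borel_measurable M" and Zd: "\<And>k. distr M borel (Z k) = F"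
    and indep: "prob_space.indep_sets M
        (\<lambda>j::nat. if j = 0 then gen_sigma M borel (\<lambda>_::unit. X0) UNIV
                 else if j = 1 then gen_sigma M borel W {0..}
                 else if j = 2 then gen_sigma M (count_space UNIV) N {0..}
                 else gen_sigma M borel Z UNIV) {0..3}"
    and Xm: "X u \<in> borel_measurable M" and XC: "(\<integral>\<^sup>+\<omega>. ennreal ((X u \<omega>)^2) \<partial>M) \<le> ennreal C" and C0: "0 \<le> C"
    and a: "0 < a" and u: "0 \<le> u" and h: "0 < h" "h \<le> D" and D1: "D \<le> 1" and v: "v = D powr \<beta>" and m: "1 \<le> m"
  shows "badset M X W N Z a \<sigma> v u h \<in> sets M"
    and "measure M (badset M X W N Z a \<sigma> v u h) \<le>
        C * 256 * a^2 * D powr (2 - 2*\<beta>) + 256 * a^2 * \<sigma>^2 * D powr (3 - 2*\<beta>)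
        + fact (2*m) / (2^m * fact m) * (8*\<bar>\<sigma>\<bar>)^(2*m) * D powr (real m - 2 * real m * \<beta>)
        + lam^2 * D * h + lam * h * measure F {-2* v<..<2* v}"
proof -
  interpret prob_space M by (rule M)
  have D0: "0 < D" using h by simp
  have v0: "0 < v" using D0 v by simp
  have Wm: "\<And>t. t \<ge> 0 \<Longrightarrow> W t \<in> borel_measurable M" using W unfolding std_brownian_motion_def by auto
  have Nm: "N t \<in> measurable M (count_space UNIV)" if "t \<ge> 0" for t using N that unfolding poisson_process_def by auto
  note pf = poisson_facts[OF M N u less_imp_le[OF h(1)]]
  define S1 where "S1 = {\<omega>\<in>space M. v/(16*a*h) < \<bar>X u \<omega>\<bar>}"
  define S2 where "S2 = {\<omega>\<in>space M. ennreal (v^2/(256*a^2*h)) \<le> ennreal (\<sigma>^2) * (\<integral>\<^sup>+s. ennreal (indicator {u..u+h} s * (W s \<omega> - W u \<omega>)^2) \<partial>lborel)}"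
  define S3 where "S3 = {\<omega>\<in>space M. v/8 < \<bar>\<sigma>\<bar> * \<bar>W (u+h) \<omega> - W u \<omega>\<bar>}"
  define S4 where "S4 = {\<omega>\<in>space M. 2 \<le> N (u+h) \<omega> - N u \<omega>}"
  define S5 where "S5 = {\<omega>\<in>space M. N (u+h) \<omega> - N u \<omega> = 1 \<and> Z (N u \<omega> + 1) \<omega> \<in> {-2* v<..<2* v}}"
  have bs: "badset M X W N Z a \<sigma> v u h = S1 \<union> S2 \<union> S3 \<union> S4 \<union> S5"
    unfolding badset_def S1_def S2_def S3_def S4_def S5_def ..
  have c2: "0 < v^2/(256*a^2*h)" using v0 a h by simp
  have m1: "S1 \<in> sets M" unfolding S1_def using Xm by measurable
  have m2: "S2 \<in> sets M" unfolding S2_def by (rule B2_prob(1)[OF M W u h(1) c2])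
  have m3: "S3 \<in> sets M" unfolding S3_def
  proof -
    have [measurable]: "W (u+h) \<in> borel_measurable M" "W u \<in> borel_measurable M" using Wm u h by auto
    show "{\<omega>\<in>space M. v/8 < \<bar>\<sigma>\<bar> * \<bar>W (u+h) \<omega> - W u \<omega>\<bar>} \<in> sets M" by measurable
  qed
  have Dm: "(\<lambda>\<omega>. N (u+h) \<omega> - N u \<omega>) \<in> measurable M (count_space UNIV)" by (rule pf(1))
  have m4: "S4 \<in> sets M"
  proof -
    have "S4 = (\<lambda>\<omega>. N (u+h) \<omega> - N u \<omega>) -` {k. 2 \<le> k} \<inter> space M" unfolding S4_def by auto
    moreover have "(\<lambda>\<omega>. N (u+h) \<omega> - N u \<omega>) -` {k. 2 \<le> k} \<inter> space M \<in> sets M"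
      by (rule measurable_sets[OF Dm]) simp
    ultimately show ?thesis by simp
  qed
  have m5: "S5 \<in> sets M"
  proof -
    have zm: "(\<lambda>\<omega>. Z (N u \<omega> + 1) \<omega>) \<in> borel_measurable M"
    proof -
      have "(\<lambda>\<omega>. (\<lambda>k. Z (k+1)) (N u \<omega>) \<omega>) \<in> borel_measurable M"
        by (rule measurable_compose_countable[OF _ Nm[OF u]]) (rule Zm)
      thus ?thesis by simp
    qed
    have "S5 = ((\<lambda>\<omega>. N (u+h) \<omega> - N u \<omega>) -` {1} \<inter> space M) \<inter> ((\<lambda>\<omega>. Z (N u \<omega> + 1) \<omega>) -` {-2* v<..<2* v} \<inter> space M)"
      unfolding S5_def by auto
    thus ?thesis using measurable_sets[OF Dm, of "{1}"] measurable_sets[OF zm, of "{-2* v<..<2* v}"] by auto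
  qed
  show "badset M X W N Z a \<sigma> v u h \<in> sets M" unfolding bs using m1 m2 m3 m4 m5 by auto
  have vsq: "v^2 = D powr (2*\<beta>)" using v D0 by (simp add: powr_power)
  have p1: "measure M S1 \<le> C * 256 * a^2 * D powr (2 - 2*\<beta>)"
  proof -
    have "measure M S1 \<le> C / (v/(16*a*h))^2" unfolding S1_def
      by (rule X_tail[OF M Xm XC C0]) (use v0 a h in simp)
    also have "\<dots> = C * 256 * a^2 * (h^2 / v^2)" using v0 a h by (simp add: field_simps power2_eq_square)
    also have "\<dots> \<le> C * 256 * a^2 * (D^2 / v^2)" using C0 h v0
      by (intro mult_left_mono divide_right_mono power_mono) auto
    also have "D^2 / v^2 = D powr (2 - 2*\<beta>)" using pow_div_powr[OF D0, of 2 \<beta> 2] v by simp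
    finally show ?thesis .
  qed
  have p2: "measure M S2 \<le> 256 * a^2 * \<sigma>^2 * D powr (3 - 2*\<beta>)"
  proof -
    have "measure M S2 \<le> \<sigma>^2 * h^2 / (v^2/(256*a^2*h))" unfolding S2_def by (rule B2_prob(2)[OF M W u h(1) c2])
    also have "\<dots> = 256 * a^2 * \<sigma>^2 * (h^3 / v^2)" using v0 a h by (simp add: field_simps power2_eq_square power3_eq_cube)
    also have "\<dots> \<le> 256 * a^2 * \<sigma>^2 * (D^3 / v^2)" using h v0
      by (intro mult_left_mono divide_right_mono power_mono) auto
    also have "D^3 / v^2 = D powr (3 - 2*\<beta>)" using pow_div_powr[OF D0, of 3 \<beta> 2] v by simp
    finally show ?thesis .
  qed
  have p3: "measure M S3 \<le> fact (2*m) / (2^m * fact m) * (8*\<bar>\<sigma>\<bar>)^(2*m) * D powr (real m - 2 * real m * \<beta>)"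
  proof -
    have "measure M S3 \<le> fact (2*m) / ((2/h)^m * fact m) * (\<bar>\<sigma>\<bar>/(v/8))^(2*m)" unfolding S3_def
      by (rule BM_tail[OF M W u h(1) _ m]) (use v0 in simp)
    also have "\<dots> = fact (2*m) / (2^m * fact m) * (8*\<bar>\<sigma>\<bar>)^(2*m) * (h^m / v^(2*m))"
      using h v0 by (simp add: power_divide field_simps power_mult_distrib)
    also have "\<dots> \<le> fact (2*m) / (2^m * fact m) * (8*\<bar>\<sigma>\<bar>)^(2*m) * (D^m / v^(2*m))" using h v0
      by (intro mult_left_mono divide_right_mono power_mono) auto
    also have "D^m / v^(2*m) = D powr (real m - 2 * real m * \<beta>)" using pow_div_powr[OF D0, of m \<beta> "2*m"] v by simp
    finally show ?thesis .
  qed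
  have p4: "measure M S4 \<le> lam^2 * D * h"
  proof -
    have "measure M S4 \<le> (lam * h)^2" unfolding S4_def by (rule poisson_ge2[OF M N u _ lam]) (use h in simp)
    also have "\<dots> = lam^2 * h * h" by (simp add: power2_eq_square)
    also have "\<dots> \<le> lam^2 * D * h" using h by (intro mult_right_mono mult_left_mono) auto
    finally show ?thesis .
  qed
  have p5: "measure M S5 \<le> lam * h * measure F {-2* v<..<2* v}" unfolding S5_def
    by (rule jump_small[OF M N lam Zm Zd indep u]) (use h in auto)
  have "measure M (badset M X W N Z a \<sigma> v u h) \<le> measure M S1 + measure M S2 + measure M S3 + measure M S4 + measure M S5"
  proof -
    have "measure M (S1 \<union> S2 \<union> S3 \<union> S4 \<union> S5) \<le> measure M (S1 \<union> S2 \<union> S3 \<union> S4) + measure M S5"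
      using m1 m2 m3 m4 m5 by (intro measure_Un_le) auto
    moreover have "measure M (S1 \<union> S2 \<union> S3 \<union> S4) \<le> measure M (S1 \<union> S2 \<union> S3) + measure M S4"
      using m1 m2 m3 m4 by (intro measure_Un_le) auto
    moreover have "measure M (S1 \<union> S2 \<union> S3) \<le> measure M (S1 \<union> S2) + measure M S3"
      using m1 m2 m3 by (intro measure_Un_le) auto
    moreover have "measure M (S1 \<union> S2) \<le> measure M S1 + measure M S2"
      using m1 m2 by (intro measure_Un_le) auto
    ultimately show ?thesis unfolding bs by linarith
  qed
  thus "measure M (badset M X W N Z a \<sigma> v u h) \<le>
        C * 256 * a^2 * D powr (2 - 2*\<beta>) + 256 * a^2 * \<sigma>^2 * D powr (3 - 2*\<beta>)
        + fact (2*m) / (2^m * fact m) * (8*\<bar>\<sigma>\<bar>)^(2*m) * D powr (real m - 2 * real m * \<beta>)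
        + lam^2 * D * h + lam * h * measure F {-2* v<..<2* v}"
    using p1 p2 p3 p4 p5 by linarith
qed

lemma good_from_notbad:
  fixes X W :: "real \<Rightarrow> 'a \<Rightarrow> real" and N :: "real \<Rightarrow> 'a \<Rightarrow> nat" and Z :: "nat \<Rightarrow> 'a \<Rightarrow> real"
  assumes \<omega>: "\<omega> \<in> space M" and nb: "\<omega> \<notin> badset M X W N Z a \<sigma> v u h"
    and SDE: "\<And>s. s \<ge> 0 \<Longrightarrow> X s \<omega> = X 0 \<omega> - a * integral {0..s} (\<lambda>r. X r \<omega>) + (\<sigma> * W s \<omega> + (\<Sum>k\<in>{1..N s \<omega>}. Z k \<omega>))"
    and int: "\<And>s. s \<ge> 0 \<Longrightarrow> (\<lambda>r. X r \<omega>) integrable_on {0..s}"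
    and Wc: "continuous_on {0..} (\<lambda>t. W t \<omega>)"
    and Nmono: "\<And>s t. 0 \<le> s \<Longrightarrow> s \<le> t \<Longrightarrow> N s \<omega> \<le> N t \<omega>"
    and u: "0 \<le> u" and h: "0 < h" and a: "0 < a" and v: "0 < v" and ah: "a * h \<le> 1/8"
  shows "(\<bar>X (u+h) \<omega> - X u \<omega>\<bar> \<le> v) \<longleftrightarrow> (real (N (u+h) \<omega>) - real (N u \<omega>) = 0)"
proof (rule pathwise[where Xf="\<lambda>s. X s \<omega>" and Wf="\<lambda>s. W s \<omega>" and Nf="\<lambda>s. N s \<omega>" and Zf="\<lambda>k. Z k \<omega>",
      OF SDE int Wc Nmono u h a v ah])
  from nb \<omega> have n1: "\<not> v/(16*a*h) < \<bar>X u \<omega>\<bar>"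
    and n2: "\<not> ennreal (v^2/(256*a^2*h)) \<le> ennreal (\<sigma>^2) * (\<integral>\<^sup>+s. ennreal (indicator {u..u+h} s * (W s \<omega> - W u \<omega>)^2) \<partial>lborel)"
    and n3: "\<not> v/8 < \<bar>\<sigma>\<bar> * \<bar>W (u+h) \<omega> - W u \<omega>\<bar>"
    and n4: "\<not> 2 \<le> N (u+h) \<omega> - N u \<omega>"
    and n5: "\<not> (N (u+h) \<omega> - N u \<omega> = 1 \<and> Z (N u \<omega> + 1) \<omega> \<in> {-2* v<..<2* v})"
    unfolding badset_def by auto
  have "\<bar>X u \<omega>\<bar> \<le> v/(16*a*h)" using n1 by simp
  hence "a * h * \<bar>X u \<omega>\<bar> \<le> a * h * (v/(16*a*h))" using a h by (intro mult_left_mono) auto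
  thus "a * h * \<bar>X u \<omega>\<bar> \<le> v/16" using a h by simp
  show "a * \<bar>\<sigma>\<bar> * integral {u..u+h} (\<lambda>s. \<bar>W s \<omega> - W u \<omega>\<bar>) \<le> v/16"
    by (rule g2_link[OF Wc u h a v]) (use n2 in \<open>simp add: not_le\<close>)
  show "\<bar>\<sigma>\<bar> * \<bar>W (u+h) \<omega> - W u \<omega>\<bar> \<le> v/8" using n3 by simp
  show "N (u+h) \<omega> \<le> N u \<omega> + 1" using n4 by simp
  assume "N (u+h) \<omega> = N u \<omega> + 1"
  hence "Z (N u \<omega> + 1) \<omega> \<notin> {-2* v<..<2* v}" using n5 by simp
  thus "2 * v \<le> \<bar>Z (N u \<omega> + 1) \<omega>\<bar>" by auto
qed

lemma term_bound:
  fixes D K T A p e :: real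
  assumes D: "0 < D" "D \<le> 1" and nK: "real n * D \<le> K * T" and pe: "p \<le> e" and A: "0 \<le> A"
  shows "real n * (A * D powr (1 + e)) \<le> A * K * (T * D powr p)"
proof -
  have "real n * (A * D powr (1 + e)) = A * ((real n * D) * D powr e)"
    using D by (simp add: powr_add)
  also have "\<dots> \<le> A * ((K * T) * D powr e)" using nK A by (intro mult_left_mono mult_right_mono) auto
  also have "\<dots> \<le> A * ((K * T) * D powr p)"
  proof -
    have "0 \<le> K * T" using nK by (smt (verit) D(1) mult_nonneg_nonneg of_nat_0_le_iff)
    thus ?thesis using A powr_anti[OF D pe] by (intro mult_left_mono) auto
  qed
  finally show ?thesis by (simp add: algebra_simps)
qed

theorem lemma3p3:
  fixes M :: "'a measure" and F :: "real measure"
    and W :: "real \<Rightarrow> 'a \<Rightarrow> real" and N :: "real \<Rightarrow> 'a \<Rightarrow> nat"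
    and Z :: "nat \<Rightarrow> 'a \<Rightarrow> real" and X :: "real \<Rightarrow> 'a \<Rightarrow> real"
    and \<sigma> a lam \<beta> :: real
    and t :: "nat \<Rightarrow> nat \<Rightarrow> real"
    and T Delta :: "nat \<Rightarrow> real"
  assumes M: "prob_space M"
    \<comment> \<open>the Levy process L = sigma W + J, J compound Poisson\<close>
    and W: "std_brownian_motion M W"
    and lam: "0 < lam"
    and N: "poisson_process M lam N"
    and F: "prob_space F" "sets F = sets borel"
    and Z_distr: "\<And>k. Z k \<in> borel_measurable M" "\<And>k. distr M borel (Z k) = F"
    and Z_indep: "prob_space.indep_vars M (\<lambda>_. borel) Z UNIV"
    and X0_meas: "X 0 \<in> borel_measurable M"
    and indep: "prob_space.indep_sets M
        (\<lambda>j::nat. if j = 0 then gen_sigma M borel (\<lambda>_::unit. X 0) UNIV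
                 else if j = 1 then gen_sigma M borel W {0..}
                 else if j = 2 then gen_sigma M (count_space UNIV) N {0..}
                 else gen_sigma M borel Z UNIV) {0..3}"
    \<comment> \<open>X solves dX_t = -a X_t dt + dL_t (integral form, pathwise)\<close>
    and X_meas: "\<And>s. s \<ge> 0 \<Longrightarrow> X s \<in> borel_measurable M"
    and X_int: "\<And>\<omega> s. \<omega> \<in> space M \<Longrightarrow> s \<ge> 0 \<Longrightarrow> (\<lambda>r. X r \<omega>) integrable_on {0..s}"
    and X_sde: "\<And>\<omega> s. \<omega> \<in> space M \<Longrightarrow> s \<ge> 0 \<Longrightarrow>
        X s \<omega> = X 0 \<omega> - a * integral {0..s} (\<lambda>r. X r \<omega>)
                 + (\<sigma> * W s \<omega> + (\<Sum>k\<in>{1..N s \<omega>}. Z k \<omega>))"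
    \<comment> \<open>(i)\<close>
    and a_pos: "0 < a"
    and log_moment: "(\<integral>\<^sup>+x. ennreal (indicator {x. 1 < \<bar>x\<bar>} x * ln \<bar>x\<bar>) \<partial>F) < \<infinity>"
    and second_moment: "\<exists>C::real. \<forall>s\<ge>0. (\<integral>\<^sup>+\<omega>. ennreal ((X s \<omega>)\<^sup>2) \<partial>M) \<le> ennreal C"
    \<comment> \<open>observation scheme\<close>
    and t0: "\<And>n. t n 0 = 0"
    and t_mono: "\<And>n i. i < n \<Longrightarrow> t n i < t n (Suc i)"
    and T_def: "\<And>n. T n = t n n"
    and T_lim: "filterlim T at_top sequentially"
    and Delta_def: "\<And>n. Delta n = Max {t n (Suc i) - t n i | i. i < n}"
    and Delta_dec: "decseq Delta"
    and Delta_lim: "Delta \<longlonglongrightarrow> 0"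
    and scheme: "(\<lambda>n. real n * Delta n / T n) \<in> O(\<lambda>_. 1)"
    \<comment> \<open>(ii)\<close>
    and small_jumps: "(\<lambda>n. measure F {- 2 * Delta n powr \<beta> <..< 2 * Delta n powr \<beta>}) \<in> o(\<lambda>n. 1 / T n)"
    \<comment> \<open>(iii)\<close>
    and \<beta>: "0 < \<beta>" "\<beta> < 1/2"
    and rate: "(\<lambda>n. T n * Delta n powr (min (1 - 2 * \<beta>) (1/2))) \<longlonglongrightarrow> 0"
  shows "(\<lambda>n. measure M {\<omega>\<in>space M. \<forall>i<n.
            (\<bar>X (t n (Suc i)) \<omega> - X (t n i) \<omega>\<bar> \<le> Delta n powr \<beta>)
              \<longleftrightarrow> (real (N (t n (Suc i)) \<omega>) - real (N (t n i) \<omega>) = 0)}) \<longlonglongrightarrow> 1"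
proof -
  interpret prob_space M by (rule M)
  have Wc: "\<And>\<omega>. \<omega> \<in> space M \<Longrightarrow> continuous_on {0..} (\<lambda>s. W s \<omega>)"
    using W unfolding std_brownian_motion_def by auto
  have Nm: "\<And>s. s \<ge> 0 \<Longrightarrow> N s \<in> measurable M (count_space UNIV)"
    and Nmono: "\<And>\<omega> s r. \<omega> \<in> space M \<Longrightarrow> 0 \<le> s \<Longrightarrow> s \<le> r \<Longrightarrow> N s \<omega> \<le> N r \<omega>"
    using N unfolding poisson_process_def by auto
  obtain C where C: "\<And>s. s \<ge> 0 \<Longrightarrow> (\<integral>\<^sup>+\<omega>. ennreal ((X s \<omega>)\<^sup>2) \<partial>M) \<le> ennreal C"
    using second_moment by auto
  define C' where "C' = max C 0"
  have C'0: "0 \<le> C'" by (simp add: C'_def)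
  have C': "(\<integral>\<^sup>+\<omega>. ennreal ((X s \<omega>)^2) \<partial>M) \<le> ennreal C'" if "s \<ge> 0" for s
  proof -
    have "ennreal C \<le> ennreal C'" unfolding C'_def by (rule ennreal_leI) simp
    thus ?thesis using C[OF that] by simp
  qed
  have tpos: "\<And>n i. i \<le> n \<Longrightarrow> 0 \<le> t n i"
  proof -
    fix n i :: nat show "i \<le> n \<Longrightarrow> 0 \<le> t n i"
    proof (induction i)
      case 0 show ?case by (simp add: t0)
    next
      case (Suc i) hence "t n i < t n (Suc i)" using t_mono by simp
      with Suc show ?case by simp
    qed
  qed
  have hpos: "\<And>n i. i < n \<Longrightarrow> 0 < t n (Suc i) - t n i" using t_mono by simp
  have hle: "\<And>n i. i < n \<Longrightarrow> t n (Suc i) - t n i \<le> Delta n"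
  proof -
    fix n i :: nat assume i: "i < n"
    have "{t n (Suc i) - t n i | i. i < n} = (\<lambda>i. t n (Suc i) - t n i) ` {..<n}" by auto
    hence fin: "finite {t n (Suc i) - t n i | i. i < n}" by simp
    show "t n (Suc i) - t n i \<le> Delta n" unfolding Delta_def by (rule Max_ge[OF fin]) (use i in blast)
  qed
  have Tsum: "\<And>n. (\<Sum>i<n. t n (Suc i) - t n i) = T n" by (simp add: sum_lessThan_telescope T_def t0)
  have Tnn: "\<And>n. 0 \<le> T n" using tpos T_def by simp
  define m where "m = nat \<lceil>3 / (2 * (1 - 2*\<beta>))\<rceil> + 1"
  have m1: "1 \<le> m" by (simp add: m_def)
  have b0: "0 < 1 - 2*\<beta>" using \<beta> by simp
  have mb: "3/2 \<le> real m * (1 - 2*\<beta>)"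
  proof -
    have "3 / (2 * (1 - 2*\<beta>)) \<le> real m" unfolding m_def by linarith
    hence "3 / (2 * (1 - 2*\<beta>)) * (1 - 2*\<beta>) \<le> real m * (1 - 2*\<beta>)" using b0 by (intro mult_right_mono) auto
    moreover have "3 / (2 * (1 - 2*\<beta>)) * (1 - 2*\<beta>) = 3/2" using b0 by (simp add: field_simps)
    ultimately show ?thesis by linarith
  qed
  define p where "p = min (1 - 2*\<beta>) (1/2)"
  define cm where "cm = (fact (2*m) / (2^m * fact m) :: real)"
  define A1 where "A1 = C' * 256 * a^2"
  define A2 where "A2 = 256 * a^2 * \<sigma>^2"
  define A3 where "A3 = cm * (8*\<bar>\<sigma>\<bar>)^(2*m)"
  have A0: "0 \<le> A1" "0 \<le> A2" "0 \<le> A3" using C'0 by (auto simp: A1_def A2_def A3_def cm_def)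
  define Fn where "Fn n = measure F {- 2 * Delta n powr \<beta> <..< 2 * Delta n powr \<beta>}" for n
  define bnd where "bnd n = real n * (A1 * Delta n powr (2 - 2*\<beta>) + A2 * Delta n powr (3 - 2*\<beta>)
      + A3 * Delta n powr (real m - 2 * real m * \<beta>)) + lam^2 * Delta n * T n + lam * T n * Fn n" for n
  define good where "good n = {\<omega>\<in>space M. \<forall>i<n.
            (\<bar>X (t n (Suc i)) \<omega> - X (t n i) \<omega>\<bar> \<le> Delta n powr \<beta>)
              \<longleftrightarrow> (real (N (t n (Suc i)) \<omega>) - real (N (t n i) \<omega>) = 0)}" for n
  have evn: "eventually (\<lambda>n. 0 < n \<and> Delta n \<le> 1 \<and> a * Delta n \<le> 1/8) sequentially"
  proof -
    have "eventually (\<lambda>n. Delta n < 1) sequentially" using Delta_lim by (rule order_tendstoD) simp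
    moreover have "eventually (\<lambda>n. Delta n < 1/(8*a)) sequentially" using Delta_lim a_pos by (intro order_tendstoD) auto
    moreover have "eventually (\<lambda>n. 0 < n) sequentially" by (rule eventually_gt_at_top)
    ultimately show ?thesis
    proof eventually_elim
      case (elim n)
      hence "a * Delta n \<le> a * (1/(8*a))" using a_pos by (intro mult_left_mono) auto
      thus ?case using elim a_pos by simp
    qed
  qed
  have lower: "eventually (\<lambda>n. 1 - bnd n \<le> measure M (good n)) sequentially"
    using evn
  proof eventually_elim
    case (elim n)
    hence n0: "0 < n" and D1: "Delta n \<le> 1" and aD: "a * Delta n \<le> 1/8" by auto
    have D0: "0 < Delta n" using hpos[OF n0] hle[OF n0] by linarith
    define v where "v = Delta n powr \<beta>"
    have v0: "0 < v" using D0 by (simp add: v_def)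
    define Bad where "Bad i = badset M X W N Z a \<sigma> v (t n i) (t n (Suc i) - t n i)" for i
    have bb: "Bad i \<in> sets M \<and> measure M (Bad i) \<le> (A1 * Delta n powr (2 - 2*\<beta>) + A2 * Delta n powr (3 - 2*\<beta>)
      + A3 * Delta n powr (real m - 2 * real m * \<beta>)) + lam^2 * Delta n * (t n (Suc i) - t n i)
      + lam * (t n (Suc i) - t n i) * Fn n" if i: "i < n" for i
    proof -
      have u0: "0 \<le> t n i" using tpos i by simp
      note B = bad_bound[where X=X and u="t n i" and h="t n (Suc i) - t n i" and D="Delta n", OF M W N _ Z_distr indep X_meas[OF u0] C'[OF u0] C'0 a_pos u0 hpos[OF i] hle[OF i] D1 v_def m1, of \<sigma>]
      have fset: "{-2 * v<..<2 * v} = {- 2 * Delta n powr \<beta> <..< 2 * Delta n powr \<beta>}" by (simp add: v_def)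
      have B1: "Bad i \<in> sets M" using B(1) lam unfolding Bad_def by simp
      have B2: "measure M (Bad i) \<le> C' * 256 * a^2 * Delta n powr (2 - 2*\<beta>) + 256 * a^2 * \<sigma>^2 * Delta n powr (3 - 2*\<beta>)
        + fact (2*m) / (2^m * fact m) * (8*\<bar>\<sigma>\<bar>)^(2*m) * Delta n powr (real m - 2 * real m * \<beta>)
        + lam^2 * Delta n * (t n (Suc i) - t n i) + lam * (t n (Suc i) - t n i) * measure F {-2 * v<..<2 * v}"
        using B(2) lam unfolding Bad_def by simp
      show ?thesis using B1 B2 unfolding A1_def A2_def A3_def cm_def Fn_def fset by (simp add: add.assoc)
    qed
    have Bm: "\<And>i. i < n \<Longrightarrow> Bad i \<in> sets M" using bb by blast
    have sub: "space M - (\<Union>i<n. Bad i) \<subseteq> good n"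
    proof
      fix \<omega> assume \<omega>: "\<omega> \<in> space M - (\<Union>i<n. Bad i)"
      hence \<omega>s: "\<omega> \<in> space M" and nb: "\<And>i. i < n \<Longrightarrow> \<omega> \<notin> Bad i" by auto
      have "(\<bar>X (t n (Suc i)) \<omega> - X (t n i) \<omega>\<bar> \<le> Delta n powr \<beta>)
              \<longleftrightarrow> (real (N (t n (Suc i)) \<omega>) - real (N (t n i) \<omega>) = 0)" if i: "i<n" for i
      proof -
        have u0: "0 \<le> t n i" using tpos i by simp
        have ah: "a * (t n (Suc i) - t n i) \<le> 1/8"
        proof -
          have "a * (t n (Suc i) - t n i) \<le> a * Delta n" using hle[OF i] a_pos by (intro mult_left_mono) auto
          thus ?thesis using aD by simp
        qed
        have "(\<bar>X (t n i + (t n (Suc i) - t n i)) \<omega> - X (t n i) \<omega>\<bar> \<le> v) \<longleftrightarrow>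
            (real (N (t n i + (t n (Suc i) - t n i)) \<omega>) - real (N (t n i) \<omega>) = 0)"
          by (rule good_from_notbad[OF \<omega>s nb[OF i, unfolded Bad_def] X_sde[OF \<omega>s] X_int[OF \<omega>s] Wc[OF \<omega>s]
                Nmono[OF \<omega>s] u0 hpos[OF i] a_pos v0 ah])
        thus ?thesis by (simp add: v_def)
      qed
      thus "\<omega> \<in> good n" using \<omega>s unfolding good_def by auto
    qed
    have gm: "good n \<in> sets M"
    proof -
      have "good n = (\<Inter>i\<in>{..<n}. {\<omega>\<in>space M. (\<bar>X (t n (Suc i)) \<omega> - X (t n i) \<omega>\<bar> \<le> Delta n powr \<beta>)
              \<longleftrightarrow> (real (N (t n (Suc i)) \<omega>) - real (N (t n i) \<omega>) = 0)})"
        unfolding good_def using n0 by auto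
      also have "\<dots> \<in> sets M"
      proof (rule sets.finite_INT)
        show "finite {..<n}" by simp
        show "{..<n} \<noteq> {}" using n0 by auto
        fix i assume "i \<in> {..<n}"
        hence i: "i < n" by simp
        have [measurable]: "X (t n (Suc i)) \<in> borel_measurable M" "X (t n i) \<in> borel_measurable M"
          using X_meas tpos i by auto
        have [measurable]: "N (t n (Suc i)) \<in> measurable M (count_space UNIV)" "N (t n i) \<in> measurable M (count_space UNIV)"
          using Nm tpos i by auto
        show "{\<omega>\<in>space M. (\<bar>X (t n (Suc i)) \<omega> - X (t n i) \<omega>\<bar> \<le> Delta n powr \<beta>)
              \<longleftrightarrow> (real (N (t n (Suc i)) \<omega>) - real (N (t n i) \<omega>) = 0)} \<in> sets M" by measurable
      qed
      finally show ?thesis .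
    qed
    define c0 where "c0 = A1 * Delta n powr (2 - 2*\<beta>) + A2 * Delta n powr (3 - 2*\<beta>)
      + A3 * Delta n powr (real m - 2 * real m * \<beta>)"
    have "(\<Sum>i<n. measure M (Bad i)) \<le> (\<Sum>i<n. c0 + lam^2 * Delta n * (t n (Suc i) - t n i)
      + lam * (t n (Suc i) - t n i) * Fn n)"
      using bb unfolding c0_def by (intro sum_mono) auto
    also have "\<dots> = bnd n"
    proof -
      have s1: "(\<Sum>i<n. lam^2 * Delta n * (t n (Suc i) - t n i)) = lam^2 * Delta n * T n"
        unfolding Tsum[symmetric] by (simp add: sum_distrib_left)
      have s2: "(\<Sum>i<n. lam * (t n (Suc i) - t n i) * Fn n) = lam * T n * Fn n"
        unfolding Tsum[symmetric] by (simp add: sum_distrib_left sum_distrib_right)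
      show ?thesis unfolding bnd_def c0_def[symmetric] sum.distrib s1 s2 by simp
    qed
    finally have sb: "(\<Sum>i<n. measure M (Bad i)) \<le> bnd n" .
    have "measure M (\<Union>i<n. Bad i) \<le> (\<Sum>i<n. measure M (Bad i))"
      by (rule finite_measure_subadditive_finite) (use Bm in auto)
    hence "1 - bnd n \<le> 1 - measure M (\<Union>i<n. Bad i)" using sb by linarith
    also have "\<dots> = measure M (space M - (\<Union>i<n. Bad i))"
      by (rule prob_compl[symmetric]) (use Bm in auto)
    also have "\<dots> \<le> measure M (good n)" by (rule finite_measure_mono[OF sub gm])
    finally show ?case .
  qed
  obtain K where K: "K > 0" "eventually (\<lambda>n. norm (real n * Delta n / T n) \<le> K * norm (1::real)) sequentially"
    using landau_o.bigE[OF scheme] by blast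
  have Tpos: "eventually (\<lambda>n. 0 < T n) sequentially"
    using T_lim by (simp add: filterlim_at_top_dense)
  define R where "R n = T n * Delta n powr p" for n
  have Rlim: "R \<longlonglongrightarrow> 0" using rate unfolding R_def p_def by simp
  define G where "G n = Fn n / (1 / T n)" for n
  have Glim: "G \<longlonglongrightarrow> 0" using smalloD_tendsto[OF small_jumps] unfolding G_def Fn_def by simp
  define U where "U n = (A1 + A2 + A3) * K * R n + lam^2 * R n + lam * G n" for n
  have Ulim: "U \<longlonglongrightarrow> 0" unfolding U_def using Rlim Glim by (auto intro!: tendsto_eq_intros)
  have bnd_ev: "eventually (\<lambda>n. 0 \<le> bnd n \<and> bnd n \<le> U n) sequentially"
    using evn K(2) Tpos
  proof eventually_elim
    case (elim n)
    hence n0: "0 < n" and D1: "Delta n \<le> 1" and T0: "0 < T n" and nK0: "\<bar>real n * Delta n / T n\<bar> \<le> K" by auto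
    have D0: "0 < Delta n" using hpos[OF n0] hle[OF n0] by linarith
    have nK: "real n * Delta n \<le> K * T n"
    proof -
      have "real n * Delta n / T n \<le> K" using nK0 abs_ge_self[of "real n * Delta n / T n"] by linarith
      thus ?thesis using T0 by (simp add: field_simps)
    qed
    have Fn0: "0 \<le> Fn n" by (simp add: Fn_def)
    have t1: "real n * (A1 * Delta n powr (1 + (1 - 2*\<beta>))) \<le> A1 * K * R n"
      unfolding R_def by (rule term_bound[OF D0 D1 nK _ A0(1)]) (simp add: p_def)
    have t2: "real n * (A2 * Delta n powr (1 + (2 - 2*\<beta>))) \<le> A2 * K * R n"
      unfolding R_def by (rule term_bound[OF D0 D1 nK _ A0(2)]) (use \<beta> in \<open>simp add: p_def\<close>)
    have t3: "real n * (A3 * Delta n powr (1 + (real m - 2 * real m * \<beta> - 1))) \<le> A3 * K * R n"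
      unfolding R_def by (rule term_bound[OF D0 D1 nK _ A0(3)]) (use mb in \<open>simp add: p_def algebra_simps\<close>)
    have t4: "lam^2 * Delta n * T n \<le> lam^2 * R n"
    proof -
      have "Delta n powr 1 \<le> Delta n powr p" by (rule powr_anti[OF D0 D1]) (simp add: p_def)
      hence "Delta n \<le> Delta n powr p" using D0 by simp
      hence "lam^2 * T n * Delta n \<le> lam^2 * T n * Delta n powr p" using Tnn[of n] by (intro mult_left_mono) auto
      thus ?thesis unfolding R_def by (simp add: algebra_simps)
    qed
    have t5: "lam * T n * Fn n = lam * G n" unfolding G_def by simp
    have e1: "1 + (1 - 2*\<beta>) = 2 - 2*\<beta>" "1 + (2 - 2*\<beta>) = 3 - 2*\<beta>"
      "1 + (real m - 2 * real m * \<beta> - 1) = real m - 2 * real m * \<beta>" by simp_all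
    have be: "bnd n = real n * (A1 * Delta n powr (2 - 2*\<beta>)) + real n * (A2 * Delta n powr (3 - 2*\<beta>))
      + real n * (A3 * Delta n powr (real m - 2 * real m * \<beta>)) + lam^2 * Delta n * T n + lam * T n * Fn n"
      unfolding bnd_def by (simp only: distrib_left)
    have ue: "U n = A1 * K * R n + A2 * K * R n + A3 * K * R n + lam^2 * R n + lam * G n"
      unfolding U_def by (simp only: distrib_right)
    have "bnd n \<le> U n"
      using t1[unfolded e1] t2[unfolded e1] t3[unfolded e1] t4 t5 unfolding be ue by linarith
    moreover have "0 \<le> bnd n" unfolding bnd_def using A0 Tnn[of n] Fn0 lam D0 by (intro add_nonneg_nonneg mult_nonneg_nonneg) auto
    ultimately show ?case by simp
  qed
  have bnd_lim: "bnd \<longlonglongrightarrow> 0"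
    by (rule tendsto_sandwich[where f="\<lambda>_. 0" and h=U]) (use bnd_ev Ulim in \<open>auto elim: eventually_mono\<close>)
  have "(\<lambda>n. measure M (good n)) \<longlonglongrightarrow> 1"
  proof (rule tendsto_sandwich[where f="\<lambda>n. 1 - bnd n" and h="\<lambda>_. 1"])
    show "eventually (\<lambda>n. 1 - bnd n \<le> measure M (good n)) sequentially" by (rule lower)
    show "eventually (\<lambda>n. measure M (good n) \<le> 1) sequentially" by (simp add: prob_le_1)
    show "(\<lambda>n. 1 - bnd n) \<longlonglongrightarrow> 1" using tendsto_diff[OF tendsto_const bnd_lim, of 1] by simp
  qed simp
  thus ?thesis unfolding good_def .
qed

end
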